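(* Let $(u^n_\Delta)_{n\ge0}$ be a discrete solution with associated $(\vec x^n_\Delta)_{n\ge0}$. Then for every $N\in\mathbb{N}$, $$\frac1{2\tau}\sum_{n=1}^N\mathbf{W}_2(u^n_\Delta,u^{n-1}_\Delta)^2\le\mathbf{E}(u^0_\Delta)-\mathbf{E}(u^N_\Delta),$$ $$\frac\tau2\sum_{n=1}^N[\partial_{\vec x}\mathbb{E}_{\boldsymbol\xi}(\vec x^n_\Delta)]^T\mathrm{W}^{-1}[\partial_{\vec x}\mathbb{E}_{\boldsymbol\xi}(\vec x^n_\Delta)]\le\mathbf{E}(u^0_\Delta)-\mathbf{E}(u^N_\Delta).$$
   Context: $I=[a,b]$, $M>0$, $\tau>0$ with $\tau\Lambda<1$. $\mathrm{P}:[0,\infty)\to\mathbb{R}$ continuous, $C^2$ on $(0,\infty)$, with $\mathrm{P}(0)=0$, $\mathrm{P}'>0$ on $(0,\infty)$, $\lim_{r\downarrow0}\mathrm{P}'(r)<\infty$, $\lim_{r\to\infty}\mathrm{P}'(r)=\infty$, $s\mapsto\mathrm{P}(1/s)$ concave. $\phi$ is a second antiderivative of $r\mapsto\mathrm{P}'(r)/r$, $\psi(s)=s\phi(1/s)$. $V\in C^2(I)$, $V_x(a)=V_x(b)=0$, $\Lambda=\max_I(-V_{xx})$. $\mathbf{E}(u)=\int_I\phi(u)+\int_IuV$; $\mathbf{W}_2$ is the $L^2$-Wasserstein distance. Mesh $\boldsymbol\xi=(\xi_0,\dots,\xi_K)$, $0=\xi_0<\dots<\xi_K=M$, $\delta_k=\xi_k-\xi_{k-1}$;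 $\mathfrak{x}=\{\vec x:a<x_1<\dots<x_{K-1}<b\}$, $x_0=a$, $x_K=b$; $\mathbf{u}_{\boldsymbol\xi}[\vec x]=\sum_k\frac{\delta_k}{x_k-x_{k-1}}\mathbf{1}_{(x_{k-1},x_k]}$, $\mathrm{D}^M_{\boldsymbol\xi}(I)=\mathbf{u}_{\boldsymbol\xi}[\mathfrak{x}]$; $\theta_k$ the hat functions on $[0,M]$ w.r.t. $\boldsymbol\xi$, $\mathbf{X}_{\boldsymbol\xi}[\vec x]=\sum_kx_k\theta_k$; $\mathbb{E}_{\boldsymbol\xi}(\vec x)=\sum_k\delta_k\psi(\frac{x_k-x_{k-1}}{\delta_k})+\int_0^MV(\mathbf{X}_{\boldsymbol\xi}[\vec x])d\xi$ with Euclidean gradient $\partial_{\vec x}\mathbb{E}_{\boldsymbol\xi}$. $\mathrm{W}$ is the symmetric tridiagonal matrix with $\mathrm{W}_{k,k}=\frac13(\delta_k+\delta_{k+1})$, $\mathrm{W}_{k,k+1}=\mathrm{W}_{k+1,k}=\frac16\delta_{k+1}$. A discrete solution: $u^0_\Delta\in\mathrm{D}^M_{\boldsymbol\xi}(I)$ given, and $u^n_\Delta$ the (unique) minimizer over $\mathrm{D}^M_{\boldsymbol\xi}(I)$ of $\frac1{2\tau}\mathbf{W}_2(u,u^{n-1}_\Delta)^2+\mathbf{E}(u)$; $\vec x^n_\Delta\in\mathfrak{x}$ with $u^n_\Delta=\mathbf{u}_{\boldsymbol\xi}[\vec x^n_\Delta]$. *)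

theory Defs
  imports "HOL-Probability.Probability"
begin

text \<open>Vectors in R^(K-1) are represented as functions nat => real; only the
  entries with index 1..K-1 are meaningful. The boundary values are x_0 = a, x_K = b.\<close>

definition ext_vec :: "real \<Rightarrow> real \<Rightarrow> nat \<Rightarrow> (nat \<Rightarrow> real) \<Rightarrow> nat \<Rightarrow> real" where
  "ext_vec a b K x = (\<lambda>k. if k = 0 then a else if k = K then b else x k)"

definition is_mesh :: "real \<Rightarrow> nat \<Rightarrow> (nat \<Rightarrow> real) \<Rightarrow> bool" where
  "is_mesh M K \<xi> \<longleftrightarrow> \<xi> 0 = 0 \<and> \<xi> K = M \<and> (\<forall>k. 1 \<le> k \<and> k \<le> K \<longrightarrow> \<xi> (k - 1) < \<xi> k)"

definition mesh_delta :: "(nat \<Rightarrow> real) \<Rightarrow> nat \<Rightarrow> real" where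
  "mesh_delta \<xi> k = \<xi> k - \<xi> (k - 1)"

definition xset :: "real \<Rightarrow> real \<Rightarrow> nat \<Rightarrow> (nat \<Rightarrow> real) set" where
  "xset a b K = {x. \<forall>k. 1 \<le> k \<and> k \<le> K \<longrightarrow> ext_vec a b K x (k - 1) < ext_vec a b K x k}"

definition u_xi :: "real \<Rightarrow> real \<Rightarrow> nat \<Rightarrow> (nat \<Rightarrow> real) \<Rightarrow> (nat \<Rightarrow> real) \<Rightarrow> real \<Rightarrow> real" where
  "u_xi a b K \<xi> x = (\<lambda>y. \<Sum>k=1..K. mesh_delta \<xi> k / (ext_vec a b K x k - ext_vec a b K x (k - 1))
       * indicator {ext_vec a b K x (k - 1)<..ext_vec a b K x k} y)"

definition Dset :: "real \<Rightarrow> real \<Rightarrow> nat \<Rightarrow> (nat \<Rightarrow> real) \<Rightarrow> (real \<Rightarrow> real) set" where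
  "Dset a b K \<xi> = u_xi a b K \<xi> ` xset a b K"

definition hat :: "nat \<Rightarrow> (nat \<Rightarrow> real) \<Rightarrow> nat \<Rightarrow> real \<Rightarrow> real" where
  "hat K \<xi> k s =
     (if 0 < k \<and> \<xi> (k - 1) \<le> s \<and> s \<le> \<xi> k then (s - \<xi> (k - 1)) / (\<xi> k - \<xi> (k - 1))
      else if k < K \<and> \<xi> k \<le> s \<and> s \<le> \<xi> (k + 1) then (\<xi> (k + 1) - s) / (\<xi> (k + 1) - \<xi> k)
      else 0)"

definition X_xi :: "real \<Rightarrow> real \<Rightarrow> nat \<Rightarrow> (nat \<Rightarrow> real) \<Rightarrow> (nat \<Rightarrow> real) \<Rightarrow> real \<Rightarrow> real" where
  "X_xi a b K \<xi> x = (\<lambda>s. \<Sum>k=0..K. ext_vec a b K x k * hat K \<xi> k s)"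

definition E_disc :: "(real \<Rightarrow> real) \<Rightarrow> (real \<Rightarrow> real) \<Rightarrow> real \<Rightarrow> real \<Rightarrow> real \<Rightarrow> nat \<Rightarrow> (nat \<Rightarrow> real)
    \<Rightarrow> (nat \<Rightarrow> real) \<Rightarrow> real" where
  "E_disc \<phi> V a b M K \<xi> x =
     (\<Sum>k=1..K. mesh_delta \<xi> k *
        (let s = (ext_vec a b K x k - ext_vec a b K x (k - 1)) / mesh_delta \<xi> k in s * \<phi> (1 / s)))
     + integral {0..M} (\<lambda>s. V (X_xi a b K \<xi> x s))"

definition grad_E_disc :: "(real \<Rightarrow> real) \<Rightarrow> (real \<Rightarrow> real) \<Rightarrow> real \<Rightarrow> real \<Rightarrow> real \<Rightarrow> nat \<Rightarrow> (nat \<Rightarrow> real)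
    \<Rightarrow> (nat \<Rightarrow> real) \<Rightarrow> nat \<Rightarrow> real" where
  "grad_E_disc \<phi> V a b M K \<xi> x k = deriv (\<lambda>t. E_disc \<phi> V a b M K \<xi> (x(k := t))) (x k)"

text \<open>The tridiagonal matrix W (entries indexed 1..K-1).\<close>
definition Wmat :: "(nat \<Rightarrow> real) \<Rightarrow> nat \<Rightarrow> nat \<Rightarrow> real" where
  "Wmat \<xi> i j =
     (if i = j then (mesh_delta \<xi> i + mesh_delta \<xi> (i + 1)) / 3
      else if j = i + 1 then mesh_delta \<xi> (i + 1) / 6
      else if i = j + 1 then mesh_delta \<xi> (j + 1) / 6
      else 0)"

text \<open>g^T W^{-1} g, where W^{-1} g is the unique solution y of W y = g (indices 1..K-1).\<close>
definition Winv_quad :: "(nat \<Rightarrow> real) \<Rightarrow> nat \<Rightarrow> (nat \<Rightarrow> real) \<Rightarrow> real" where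
  "Winv_quad \<xi> K g =
     (let y = (THE y. (\<forall>i\<in>{1..K-1}. (\<Sum>j=1..K-1. Wmat \<xi> i j * y j) = g i)
                      \<and> (\<forall>i. i \<notin> {1..K-1} \<longrightarrow> y i = 0))
      in \<Sum>i=1..K-1. g i * y i)"

definition dens_meas :: "real \<Rightarrow> real \<Rightarrow> (real \<Rightarrow> real) \<Rightarrow> real measure" where
  "dens_meas a b u = density lborel (\<lambda>y. ennreal (u y) * indicator {a..b} y)"

definition couplings :: "real measure \<Rightarrow> real measure \<Rightarrow> (real \<times> real) measure set" where
  "couplings \<mu> \<nu> = {\<pi>. sets \<pi> = sets (borel :: (real \<times> real) measure)
       \<and> distr \<pi> borel fst = \<mu> \<and> distr \<pi> borel snd = \<nu>}"

definition W2 :: "real \<Rightarrow> real \<Rightarrow> (real \<Rightarrow> real) \<Rightarrow> (real \<Rightarrow> real) \<Rightarrow> real" where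
  "W2 a b u v = sqrt (enn2real (INF \<pi> \<in> couplings (dens_meas a b u) (dens_meas a b v).
       \<integral>\<^sup>+ p. ennreal ((fst p - snd p)\<^sup>2) \<partial>\<pi>))"

definition E_cont :: "(real \<Rightarrow> real) \<Rightarrow> (real \<Rightarrow> real) \<Rightarrow> real \<Rightarrow> real \<Rightarrow> (real \<Rightarrow> real) \<Rightarrow> real" where
  "E_cont \<phi> V a b u = integral {a..b} (\<lambda>y. \<phi> (u y)) + integral {a..b} (\<lambda>y. u y * V y)"

end

theory Submission
  imports Defs
begin



definition inc :: "nat \<Rightarrow> (nat \<Rightarrow> real) \<Rightarrow> bool" where
  "inc K p \<longleftrightarrow> (\<forall>k. 1 \<le> k \<and> k \<le> K \<longrightarrow> p (k - 1) < p k)"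

definition pl :: "nat \<Rightarrow> (nat \<Rightarrow> real) \<Rightarrow> (nat \<Rightarrow> real) \<Rightarrow> real \<Rightarrow> real" where
  "pl K p v s = (\<Sum>j=0..K. v j * hat K p j s)"

lemma inc_step: "inc K p \<Longrightarrow> 1 \<le> k \<Longrightarrow> k \<le> K \<Longrightarrow> p (k - 1) < p k"
  by (auto simp: inc_def)

lemma inc_lt: assumes "inc K p" "i < j" "j \<le> K" shows "p i < p j"
  using assms(2,3)
proof (induction j)
  case 0 then show ?case by simp
next
  case (Suc j)
  have s: "p j < p (Suc j)" using inc_step[OF assms(1), of "Suc j"] Suc.prems by simp
  show ?case
  proof (cases "i = j")
    case True then show ?thesis using s by simp
  next
    case False then have "i < j" using Suc.prems by simp
    then show ?thesis using Suc.IH Suc.prems s by simp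
  qed
qed

lemma inc_le: assumes "inc K p" "i \<le> j" "j \<le> K" shows "p i \<le> p j"
  using inc_lt[OF assms(1), of i j] assms by (cases "i = j") auto

lemma hat_zero:
  assumes "inc K p" "1 \<le> k" "k \<le> K" "p (k - 1) \<le> s" "s \<le> p k" "j \<noteq> k - 1" "j \<noteq> k" "j \<le> K"
  shows "hat K p j s = 0"
proof (cases "j < k - 1")
  case True
  have A: "\<not> (0 < j \<and> p (j - 1) \<le> s \<and> s \<le> p j) \<or> j = 0"
  proof -
    have "p j < p (k - 1)" using inc_lt[OF assms(1), of j "k-1"] True assms by simp
    then show ?thesis using assms by auto
  qed
  show ?thesis
  proof (cases "j + 1 < k - 1")
    case True
    then have "p (j+1) < p (k-1)" using inc_lt[OF assms(1), of "j+1" "k-1"] assms by simp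
    then show ?thesis using A assms unfolding hat_def by auto
  next
    case False
    then have "j + 1 = k - 1" using True by simp
    then show ?thesis using A assms unfolding hat_def by auto
  qed
next
  case False
  then have "k < j" using assms by simp
  have D: "p k < p j" using inc_lt[OF assms(1) \<open>k < j\<close> assms(8)] .
  show ?thesis
  proof (cases "j - 1 = k")
    case True then show ?thesis using D assms \<open>k<j\<close> unfolding hat_def by auto
  next
    case False
    then have "p k < p (j - 1)" using inc_lt[OF assms(1), of k "j-1"] \<open>k < j\<close> assms(8) by simp
    then show ?thesis using D assms \<open>k<j\<close> unfolding hat_def by auto
  qed
qed

lemma hat_k:
  assumes "inc K p" "1 \<le> k" "k \<le> K" "p (k - 1) \<le> s" "s \<le> p k"
  shows "hat K p k s = (s - p (k - 1)) / (p k - p (k - 1))"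
  using assms unfolding hat_def by auto

lemma hat_km1:
  assumes "inc K p" "1 \<le> k" "k \<le> K" "p (k - 1) \<le> s" "s \<le> p k"
  shows "hat K p (k - 1) s = (p k - s) / (p k - p (k - 1))"
proof -
  have lt: "p (k - 1) < p k" using inc_step[OF assms(1-3)] .
  show ?thesis
  proof (cases "0 < k - 1 \<and> p (k - 1 - 1) \<le> s \<and> s \<le> p (k - 1)")
    case True
    then have "s = p (k - 1)" using assms by simp
    moreover have "p (k - 1 - 1) < p (k - 1)" using inc_step[OF assms(1), of "k-1"] True assms by auto
    ultimately show ?thesis using True lt unfolding hat_def by simp
  next
    case False
    have c: "k - 1 < K" "k - 1 + 1 = k" using assms by auto
    show ?thesis unfolding hat_def using False c assms by (simp only: if_False if_True c) simp
  qed
qed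

lemma pl_on:
  assumes "inc K p" "1 \<le> k" "k \<le> K" "p (k - 1) \<le> s" "s \<le> p k"
  shows "pl K p v s = v (k - 1) + (s - p (k - 1)) * (v k - v (k - 1)) / (p k - p (k - 1))"
proof -
  have lt: "p (k - 1) < p k" using inc_step[OF assms(1-3)] .
  have "pl K p v s = (\<Sum>j\<in>{k-1,k}. v j * hat K p j s)"
    unfolding pl_def
    by (rule sum.mono_neutral_right) (use assms hat_zero[OF assms] in auto)
  also have "\<dots> = v (k-1) * ((p k - s) / (p k - p (k - 1))) + v k * ((s - p (k - 1)) / (p k - p (k - 1)))"
    using assms hat_k[OF assms] hat_km1[OF assms] by simp
  also have "\<dots> = (v (k-1) * (p k - s) + v k * (s - p (k - 1))) / (p k - p (k - 1))"
    by (simp add: add_divide_distrib)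
  also have "\<dots> = v (k - 1) + (s - p (k - 1)) * (v k - v (k - 1)) / (p k - p (k - 1))"
    using lt by (simp add: divide_simps) (simp add: algebra_simps)
  finally show ?thesis .
qed

lemma cover:
  assumes "inc K p" "1 \<le> K" "p 0 \<le> s" "s \<le> p K"
  shows "\<exists>k. 1 \<le> k \<and> k \<le> K \<and> p (k - 1) \<le> s \<and> s \<le> p k"
proof -
  define k where "k = (LEAST k. s \<le> p k)"
  have k1: "s \<le> p k" unfolding k_def by (rule LeastI[of _ K]) (use assms in auto)
  have k2: "k \<le> K" unfolding k_def by (rule Least_le) (use assms in auto)
  show ?thesis
  proof (cases "k = 0")
    case True
    then have "s = p 0" using k1 assms by simp
    then show ?thesis using assms inc_le[OF assms(1), of 0 1] by (intro exI[of _ 1]) auto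
  next
    case False
    have "\<not> s \<le> p (k - 1)" unfolding k_def using False k_def by (metis diff_less not_less_Least zero_less_iff_neq_zero zero_less_one)
    then show ?thesis using False k1 k2 by (intro exI[of _ k]) auto
  qed
qed

lemma pl_node:
  assumes "inc K p" "1 \<le> K" "k \<le> K"
  shows "pl K p v (p k) = v k"
proof (cases "k = 0")
  case True
  have h: "p 0 \<le> p 1" "p 0 < p 1" using inc_step[OF assms(1), of 1] assms by auto
  have "pl K p v (p 0) = v (1 - 1) + (p 0 - p (1 - 1)) * (v 1 - v (1 - 1)) / (p 1 - p (1 - 1))"
    by (rule pl_on[OF assms(1)]) (use assms h in auto)
  then show ?thesis using True by simp
next
  case False
  have h: "p (k-1) < p k" using inc_step[OF assms(1), of k] assms False by auto
  have "pl K p v (p k) = v (k - 1) + (p k - p (k - 1)) * (v k - v (k - 1)) / (p k - p (k - 1))"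
    by (rule pl_on[OF assms(1)]) (use assms h False in auto)
  also have "\<dots> = v k" using h by simp
  finally show ?thesis .
qed

lemma pl_piece_range:
  assumes "inc K p" "inc K v" "1 \<le> k" "k \<le> K" "p (k - 1) \<le> s" "s \<le> p k"
  shows "v (k - 1) \<le> pl K p v s" "pl K p v s \<le> v k"
proof -
  have lt: "p (k - 1) < p k" "v (k - 1) < v k" using inc_step assms by auto
  have e: "pl K p v s = v (k - 1) + (s - p (k - 1)) * (v k - v (k - 1)) / (p k - p (k - 1))"
    using pl_on[OF assms(1,3-6)] .
  have "0 \<le> (s - p (k - 1)) * (v k - v (k - 1)) / (p k - p (k - 1))"
    using lt assms by simp
  then show "v (k - 1) \<le> pl K p v s" using e by simp
  have q: "(s - p (k - 1)) / (p k - p (k - 1)) \<le> 1" using lt assms by simp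
  have "(s - p (k - 1)) / (p k - p (k - 1)) * (v k - v (k - 1)) \<le> 1 * (v k - v (k - 1))"
    by (rule mult_right_mono[OF q]) (use lt in simp)
  then have "(s - p (k - 1)) * (v k - v (k - 1)) / (p k - p (k - 1)) \<le> (v k - v (k - 1))"
    by (simp add: mult.commute times_divide_eq_right)
  then show "pl K p v s \<le> v k" using e by simp
qed

lemma pl_inv:
  assumes "inc K p" "inc K v" "1 \<le> K" "p 0 \<le> s" "s \<le> p K"
  shows "pl K v p (pl K p v s) = s"
proof -
  obtain k where k: "1 \<le> k" "k \<le> K" "p (k - 1) \<le> s" "s \<le> p k" using cover[OF assms(1,3-5)] by blast
  have lt: "p (k - 1) < p k" "v (k - 1) < v k" using inc_step assms k by auto
  define t where "t = pl K p v s"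
  have r: "v (k - 1) \<le> t" "t \<le> v k" using pl_piece_range[OF assms(1,2) k] t_def by auto
  have e: "t = v (k - 1) + (s - p (k - 1)) * (v k - v (k - 1)) / (p k - p (k - 1))"
    using pl_on[OF assms(1) k] t_def by simp
  have "pl K v p t = p (k - 1) + (t - v (k - 1)) * (p k - p (k - 1)) / (v k - v (k - 1))"
    using pl_on[OF assms(2) k(1,2) r] .
  also have "\<dots> = s"
  proof -
    have "(t - v (k - 1)) * (p k - p (k - 1)) / (v k - v (k - 1)) = s - p (k - 1)"
      using lt unfolding e by simp
    then show ?thesis by simp
  qed
  finally show ?thesis unfolding t_def .
qed

lemma pl_range:
  assumes "inc K p" "inc K v" "1 \<le> K" "p 0 \<le> s" "s \<le> p K"
  shows "v 0 \<le> pl K p v s \<and> pl K p v s \<le> v K"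
proof -
  obtain k where k: "1 \<le> k" "k \<le> K" "p (k - 1) \<le> s" "s \<le> p k" using cover[OF assms(1,3-5)] by blast
  have "v 0 \<le> v (k - 1)" "v k \<le> v K" using inc_le[OF assms(2)] k by auto
  then show ?thesis using pl_piece_range[OF assms(1,2) k] by auto
qed

lemma pl_mono:
  assumes "inc K p" "inc K v" "1 \<le> K" "p 0 \<le> s" "s \<le> s'" "s' \<le> p K"
  shows "pl K p v s \<le> pl K p v s'"
proof -
  have s1: "s \<le> p K" "p 0 \<le> s'" using assms by linarith+
  obtain k where k: "1 \<le> k" "k \<le> K" "p (k - 1) \<le> s" "s \<le> p k" using cover[OF assms(1,3,4) s1(1)] by blast
  obtain k' where k': "1 \<le> k'" "k' \<le> K" "p (k' - 1) \<le> s'" "s' \<le> p k'" using cover[OF assms(1,3) s1(2) assms(6)] by blast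
  have lt: "p (k - 1) < p k" "v (k - 1) < v k" using inc_step assms k by auto
  consider "k = k'" | "k < k'" | "k' < k" by linarith
  then show ?thesis
  proof cases
    case 1
    have "(s - p (k - 1)) * (v k - v (k - 1)) / (p k - p (k - 1)) \<le> (s' - p (k - 1)) * (v k - v (k - 1)) / (p k - p (k - 1))"
      using lt assms by (intro divide_right_mono mult_right_mono) auto
    then show ?thesis using pl_on[OF assms(1) k] pl_on[OF assms(1) k'] 1 by simp
  next
    case 2
    have "v k \<le> v (k' - 1)" using inc_le[OF assms(2), of k "k'-1"] 2 k' by simp
    then show ?thesis using pl_piece_range[OF assms(1,2) k] pl_piece_range[OF assms(1,2) k'] by linarith
  next
    case 3
    have "p k' \<le> p (k - 1)" using inc_le[OF assms(1), of k' "k-1"] 3 k by simp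
    then have "s = s'" using k k' assms by linarith
    then show ?thesis by simp
  qed
qed

lemma pl_strict:
  assumes "inc K p" "inc K v" "1 \<le> K" "p 0 \<le> s" "s < s'" "s' \<le> p K"
  shows "pl K p v s < pl K p v s'"
proof -
  have "pl K p v s \<le> pl K p v s'" using pl_mono[OF assms(1-4)] assms by simp
  moreover have "pl K p v s \<noteq> pl K p v s'"
    using pl_inv[OF assms(1-3), of s] pl_inv[OF assms(1-3), of s'] assms by force
  ultimately show ?thesis by simp
qed

lemma pl_cont:
  assumes "inc K p" "1 \<le> K"
  shows "continuous_on {p 0..p K} (pl K p v)"
proof -
  have U: "{p 0..p K} = (\<Union>k\<in>{1..K}. {p (k-1)..p k})"
  proof
    show "{p 0..p K} \<subseteq> (\<Union>k\<in>{1..K}. {p (k-1)..p k})"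
    proof
      fix s assume "s \<in> {p 0..p K}"
      then obtain k where k: "1 \<le> k" "k \<le> K" "p (k - 1) \<le> s" "s \<le> p k"
        using cover[OF assms] by auto
      then show "s \<in> (\<Union>k\<in>{1..K}. {p (k-1)..p k})" by auto
    qed
    show "(\<Union>k\<in>{1..K}. {p (k-1)..p k}) \<subseteq> {p 0..p K}"
    proof
      fix s assume "s \<in> (\<Union>k\<in>{1..K}. {p (k-1)..p k})"
      then obtain k where k: "1 \<le> k" "k \<le> K" "p (k - 1) \<le> s" "s \<le> p k" by auto
      have "p 0 \<le> p (k - 1)" "p k \<le> p K" using inc_le[OF assms(1)] k by auto
      then show "s \<in> {p 0..p K}" using k by auto
    qed
  qed
  have "continuous_on (\<Union>k\<in>{1..K}. {p (k-1)..p k}) (pl K p v)"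
  proof (rule continuous_on_closed_Union)
    fix k assume k: "k \<in> {1..K}"
    have c: "continuous_on {p (k-1)..p k} (\<lambda>s. v (k - 1) + (s - p (k - 1)) * ((v k - v (k - 1)) / (p k - p (k - 1))))"
      by (intro continuous_intros)
    show "continuous_on {p (k-1)..p k} (pl K p v)"
    proof (rule continuous_on_eq[OF c])
      fix s assume "s \<in> {p (k-1)..p k}"
      then show "v (k - 1) + (s - p (k - 1)) * ((v k - v (k - 1)) / (p k - p (k - 1))) = pl K p v s"
        using pl_on[OF assms(1), of k s v] k by simp
    qed
  qed simp_all
  then show ?thesis using U by simp
qed

lemma pl_deriv:
  assumes "inc K p" "1 \<le> k" "k \<le> K" "p (k - 1) < s" "s < p k"
  shows "(pl K p v has_real_derivative (v k - v (k - 1)) / (p k - p (k - 1))) (at s)"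
proof -
  have d: "((\<lambda>s. v (k - 1) + (s - p (k - 1)) * ((v k - v (k - 1)) / (p k - p (k - 1))))
     has_real_derivative (v k - v (k - 1)) / (p k - p (k - 1))) (at s)"
    using assms(4,5) by (auto intro!: derivative_eq_intros)
  show ?thesis
  proof (rule has_field_derivative_transform_within_open[OF d, of "{p (k-1)<..<p k}"])
    fix y assume "y \<in> {p (k-1)<..<p k}"
    then show "v (k - 1) + (y - p (k - 1)) * ((v k - v (k - 1)) / (p k - p (k - 1))) = pl K p v y"
      using pl_on[OF assms(1-3), of y v] by simp
  qed (use assms in auto)
qed




lemma cont_leb:
  fixes f :: "real \<Rightarrow> real"
  assumes "continuous_on {c..d} f"
  shows "integrable (lebesgue_on {c..d}) f" "integral\<^sup>L (lebesgue_on {c..d}) f = integral {c..d} f"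
proof -
  have "f absolutely_integrable_on {c..d}" using absolutely_integrable_continuous_real[OF assms] .
  then show i: "integrable (lebesgue_on {c..d}) f"
    unfolding set_integrable_def by (subst integrable_restrict_space) auto
  show "integral\<^sup>L (lebesgue_on {c..d}) f = integral {c..d} f"
    using has_integral_integral_lebesgue_on[OF i] by (simp add: integral_unique)
qed

lemma mesh_inc: "is_mesh M K \<xi> \<Longrightarrow> inc K \<xi>"
  unfolding is_mesh_def inc_def by auto

lemma ext_inc: "y \<in> xset a b K \<Longrightarrow> inc K (ext_vec a b K y)"
  unfolding xset_def inc_def by auto

lemma ext_0[simp]: "ext_vec a b K y 0 = a" by (simp add: ext_vec_def)
lemma ext_K[simp]: "1 \<le> K \<Longrightarrow> ext_vec a b K y K = b" by (simp add: ext_vec_def)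

lemma X_pl: "X_xi a b K \<xi> y = pl K \<xi> (ext_vec a b K y)"
  unfolding X_xi_def pl_def by simp

lemma u_val:
  assumes "inc K e" "1 \<le> k" "k \<le> K" "e (k - 1) < t" "t \<le> e k"
  shows "(\<Sum>j=1..K. d j / (e j - e (j - 1)) * indicator {e (j - 1)<..e j} t) = d k / (e k - e (k - 1))"
proof -
  have "(\<Sum>j=1..K. d j / (e j - e (j - 1)) * indicator {e (j - 1)<..e j} t) =
        (\<Sum>j\<in>{k}. d j / (e j - e (j - 1)) * indicator {e (j - 1)<..e j} t)"
  proof (rule sum.mono_neutral_right)
    show "\<forall>j\<in>{1..K} - {k}. d j / (e j - e (j - 1)) * indicator {e (j - 1)<..e j} t = 0"
    proof
      fix j assume j: "j \<in> {1..K} - {k}"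
      have "t \<notin> {e (j - 1)<..e j}"
      proof (cases "j < k")
        case True
        then have "e j \<le> e (k - 1)" using inc_le[OF assms(1), of j "k-1"] assms by simp
        then show ?thesis using assms by auto
      next
        case False
        then have "k \<le> j - 1" using j by auto
        moreover have "j - 1 \<le> K" using j by auto
        ultimately have "e k \<le> e (j - 1)" using inc_le[OF assms(1), of k "j-1"] by simp
        then show ?thesis using assms by auto
      qed
      then show "d j / (e j - e (j - 1)) * indicator {e (j - 1)<..e j} t = 0" by simp
    qed
  qed (use assms in auto)
  then show ?thesis using assms by simp
qed

lemma u_out:
  assumes "inc K e" "t \<le> e 0 \<or> e K < t"
  shows "(\<Sum>j=1..K. d j / (e j - e (j - 1)) * indicator {e (j - 1)<..e j} t) = 0"
proof (rule sum.neutral, rule)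
  fix j assume j: "j \<in> {1..K}"
  have "e 0 \<le> e (j - 1)" "e j \<le> e K" using inc_le[OF assms(1)] j by auto
  then have "t \<notin> {e (j - 1)<..e j}" using assms by auto
  then show "d j / (e j - e (j - 1)) * indicator {e (j - 1)<..e j} t = 0" by simp
qed

definition Ufun :: "nat \<Rightarrow> (nat \<Rightarrow> real) \<Rightarrow> (nat \<Rightarrow> real) \<Rightarrow> real \<Rightarrow> real" where
  "Ufun K p e t = (\<Sum>j=1..K. (p j - p (j - 1)) / (e j - e (j - 1)) * indicator {e (j - 1)<..e j} t)"

lemma u_xi_Ufun: "u_xi a b K \<xi> y = Ufun K \<xi> (ext_vec a b K y)"
  unfolding u_xi_def Ufun_def mesh_delta_def by simp

lemma Ufun_nonneg: assumes "inc K p" "inc K e" shows "0 \<le> Ufun K p e t"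
  unfolding Ufun_def
proof (rule sum_nonneg)
  fix j assume "j \<in> {1..K}"
  then have "p (j - 1) < p j" "e (j - 1) < e j" using inc_step assms by auto
  then show "0 \<le> (p j - p (j - 1)) / (e j - e (j - 1)) * indicator {e (j - 1)<..e j} t" by simp
qed

lemma Ufun_measurable[measurable]: "Ufun K p e \<in> borel_measurable borel"
  unfolding Ufun_def by measurable

lemma F_has_integral:
  assumes "inc K p" "inc K e" "1 \<le> K" "e 0 \<le> t" "t \<le> e K"
  shows "(Ufun K p e has_integral (pl K e p t - p 0)) {e 0..t}"
proof -
  have "(Ufun K p e has_integral (pl K e p t - pl K e p (e 0))) {e 0..t}"
  proof (rule fundamental_theorem_of_calculus_interior_strong[where S = "e ` {0..K}"])
    show "continuous_on {e 0..t} (pl K e p)"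
      by (rule continuous_on_subset[OF pl_cont[OF assms(2,3)]]) (use assms in auto)
    fix x assume x: "x \<in> {e 0<..<t} - e ` {0..K}"
    then obtain k where k: "1 \<le> k" "k \<le> K" "e (k - 1) \<le> x" "x \<le> e k"
      using cover[OF assms(2,3), of x] assms by auto
    have nn: "x \<noteq> e (k - 1)" "x \<noteq> e k" using x k by auto
    then have k': "e (k - 1) < x" "x < e k" using k by auto
    have "(pl K e p has_real_derivative (p k - p (k - 1)) / (e k - e (k - 1))) (at x)"
      using pl_deriv[OF assms(2) k(1,2) k'] .
    moreover have "Ufun K p e x = (p k - p (k - 1)) / (e k - e (k - 1))"
      unfolding Ufun_def using u_val[OF assms(2) k(1,2) k'(1)] k' by simp
    ultimately show "(pl K e p has_vector_derivative Ufun K p e x) (at x)"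
      by (simp add: has_real_derivative_iff_has_vector_derivative)
  qed (use assms in auto)
  moreover have "pl K e p (e 0) = p 0" using pl_node[OF assms(2,3), of 0] by simp
  ultimately show ?thesis by simp
qed

lemma dens_Iic:
  assumes "inc K p" "inc K e" "1 \<le> K"
  shows "emeasure (density lborel (\<lambda>y. ennreal (Ufun K p e y) * indicator {e 0..e K} y)) {..t} =
    ennreal (if t < e 0 then 0 else if t \<le> e K then pl K e p t - p 0 else p K - p 0)"
proof -
  have "emeasure (density lborel (\<lambda>y. ennreal (Ufun K p e y) * indicator {e 0..e K} y)) {..t} =
     (\<integral>\<^sup>+ y. ennreal (Ufun K p e y) * indicator {e 0..e K} y * indicator {..t} y \<partial>lborel)"
    by (rule emeasure_density) auto
  also have "\<dots> = (\<integral>\<^sup>+ y. ennreal (Ufun K p e y) * indicator {e 0..min t (e K)} y \<partial>lborel)"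
    by (rule nn_integral_cong) (auto simp: indicator_def)
  also have "\<dots> = ennreal (if t < e 0 then 0 else if t \<le> e K then pl K e p t - p 0 else p K - p 0)"
  proof (cases "t < e 0")
    case True
    then have "{e 0..min t (e K)} = {}" by auto
    then show ?thesis using True by simp
  next
    case False
    have "e 0 \<le> min t (e K)" using False inc_le[OF assms(2), of 0 K] by simp
    have "(Ufun K p e has_integral (pl K e p (min t (e K)) - p 0)) {e 0..min t (e K)}"
      by (rule F_has_integral[OF assms]) (use \<open>e 0 \<le> min t (e K)\<close> in auto)
    then have "(\<integral>\<^sup>+ y. ennreal (Ufun K p e y) * indicator {e 0..min t (e K)} y \<partial>lborel) = ennreal (pl K e p (min t (e K)) - p 0)"
      by (intro nn_integral_has_integral_lebesgue') (use Ufun_nonneg[OF assms(1,2)] in auto)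
    moreover have "pl K e p (e K) = p K" using pl_node[OF assms(2,3), of K] by simp
    ultimately show ?thesis using False by (auto simp: min_def)
  qed
  finally show ?thesis .
qed

lemma leb_Icc: "c \<le> d \<Longrightarrow> measure lebesgue {c..d::real} = d - c"
  by (simp add: measure_completion)

lemma pl_meas: "inc K p \<Longrightarrow> 1 \<le> K \<Longrightarrow> pl K p e \<in> borel_measurable (lebesgue_on {p 0..p K})"
  by (rule continuous_imp_measurable_on_sets_lebesgue[OF pl_cont]) auto

lemma distr_Iic:
  assumes "inc K p" "inc K e" "1 \<le> K"
  shows "measure (distr (lebesgue_on {p 0..p K}) borel (pl K p e)) {..t} =
    (if t < e 0 then 0 else if t \<le> e K then pl K e p t - p 0 else p K - p 0)"
proof -
  let ?S = "{p 0..p K}"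
  have pK: "p 0 \<le> p K" using inc_le[OF assms(1), of 0 K] by simp
  have "measure (distr (lebesgue_on ?S) borel (pl K p e)) {..t} = measure (lebesgue_on ?S) (pl K p e -` {..t} \<inter> ?S)"
    by (subst measure_distr[OF pl_meas[OF assms(1,3)]]) auto
  also have "\<dots> = (if t < e 0 then 0 else if t \<le> e K then pl K e p t - p 0 else p K - p 0)"
  proof (cases "t < e 0")
    case True
    have "pl K p e -` {..t} \<inter> ?S = {}"
    proof (rule ccontr)
      assume "pl K p e -` {..t} \<inter> ?S \<noteq> {}"
      then obtain s where "s \<in> ?S" "pl K p e s \<le> t" by blast
      then show False using pl_range[OF assms(1,2,3), of s] True by auto
    qed
    then show ?thesis using True by simp
  next
    case False
    show ?thesis
    proof (cases "t \<le> e K")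
      case True
      define q where "q = pl K e p t"
      have q: "p 0 \<le> q" "q \<le> p K" using pl_range[OF assms(2,1,3), of t] False True q_def by auto
      have pq: "pl K p e q = t" using pl_inv[OF assms(2,1,3), of t] False True q_def by auto
      have "pl K p e -` {..t} \<inter> ?S = {p 0..q}"
      proof (rule set_eqI, rule iffI)
        fix s assume s: "s \<in> pl K p e -` {..t} \<inter> ?S"
        show "s \<in> {p 0..q}"
        proof (rule ccontr)
          assume "s \<notin> {p 0..q}"
          then have "q < s" using s by auto
          then have "pl K p e q < pl K p e s" using pl_strict[OF assms(1,2,3) q(1)] s by auto
          then show False using s pq by auto
        qed
      next
        fix s assume s: "s \<in> {p 0..q}"
        then have "pl K p e s \<le> pl K p e q" using pl_mono[OF assms(1,2,3)] q by auto
        then show "s \<in> pl K p e -` {..t} \<inter> ?S" using s q pq by auto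
      qed
      moreover have "measure (lebesgue_on ?S) {p 0..q} = q - p 0"
        by (subst measure_restrict_space) (use q leb_Icc in auto)
      ultimately show ?thesis using False True q_def by simp
    next
      case True2: False
      have "pl K p e -` {..t} \<inter> ?S = ?S"
      proof (rule set_eqI, rule iffI)
        fix s assume "s \<in> ?S"
        then have "pl K p e s \<le> e K" using pl_range[OF assms(1,2,3), of s] by auto
        then show "s \<in> pl K p e -` {..t} \<inter> ?S" using \<open>s \<in> ?S\<close> True2 by auto
      qed auto
      moreover have "measure (lebesgue_on ?S) ?S = p K - p 0"
        by (subst measure_restrict_space) (use pK leb_Icc in auto)
      ultimately show ?thesis using False True2 by simp
    qed
  qed
  finally show ?thesis .
qed

lemma MEQ:
  assumes "inc K p" "inc K e" "1 \<le> K"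
  shows "distr (lebesgue_on {p 0..p K}) borel (pl K p e) =
         density lborel (\<lambda>y. ennreal (Ufun K p e y) * indicator {e 0..e K} y)"
proof (rule cdf_unique')
  let ?S = "{p 0..p K}"
  have pK: "p 0 \<le> p K" using inc_le[OF assms(1), of 0 K] by simp
  have eK: "e 0 \<le> e K" using inc_le[OF assms(2), of 0 K] by simp
  show "finite_borel_measure (distr (lebesgue_on ?S) borel (pl K p e))"
  proof -
    interpret finite_measure "lebesgue_on ?S"
      by (rule finite_measure_lebesgue_on) (metis cbox_interval lmeasurable_cbox)
    have "finite_measure (distr (lebesgue_on ?S) borel (pl K p e))"
      by (rule finite_measure_distr[OF pl_meas[OF assms(1,3)]])
    then show ?thesis unfolding finite_borel_measure_def finite_borel_measure_axioms_def by simp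
  qed
  let ?D = "density lborel (\<lambda>y. ennreal (Ufun K p e y) * indicator {e 0..e K} y)"
  have "emeasure ?D UNIV = (\<integral>\<^sup>+ y. ennreal (Ufun K p e y) * indicator {e 0..e K} y * indicator UNIV y \<partial>lborel)"
    by (rule emeasure_density) auto
  also have "\<dots> = (\<integral>\<^sup>+ y. ennreal (Ufun K p e y) * indicator {e 0..e K} y \<partial>lborel)" by simp
  also have "\<dots> = ennreal (pl K e p (e K) - p 0)"
    by (intro nn_integral_has_integral_lebesgue' F_has_integral[OF assms])
       (use Ufun_nonneg[OF assms(1,2)] eK in auto)
  finally have fin: "emeasure ?D UNIV \<noteq> \<infinity>" by simp
  show "finite_borel_measure ?D"
    unfolding finite_borel_measure_def finite_borel_measure_axioms_def
    using fin by (auto intro!: finite_measureI)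
  show "cdf (distr (lebesgue_on ?S) borel (pl K p e)) = cdf ?D"
  proof
    fix t
    have nn: "0 \<le> (if t < e 0 then 0 else if t \<le> e K then pl K e p t - p 0 else p K - p 0)"
      using pl_range[OF assms(2,1,3), of t] pK by auto
    have "cdf ?D t = enn2real (emeasure ?D {..t})" unfolding cdf_def measure_def ..
    also have "\<dots> = (if t < e 0 then 0 else if t \<le> e K then pl K e p t - p 0 else p K - p 0)"
      using dens_Iic[OF assms, of t] nn by simp
    finally show "cdf (distr (lebesgue_on ?S) borel (pl K p e)) t = cdf ?D t"
      unfolding cdf_def using distr_Iic[OF assms, of t] by simp
  qed
qed




lemma piecewise_has_integral:
  fixes f :: "real \<Rightarrow> real"
  assumes "inc K p" "m \<le> K" "\<And>k. 1 \<le> k \<Longrightarrow> k \<le> m \<Longrightarrow> (f has_integral I k) {p (k-1)..p k}"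
  shows "(f has_integral (\<Sum>k=1..m. I k)) {p 0..p m}"
  using assms(2,3)
proof (induction m)
  case 0
  then show ?case by (simp add: has_integral_refl(2))
next
  case (Suc m)
  have ih: "(f has_integral (\<Sum>k=1..m. I k)) {p 0..p m}" using Suc by auto
  have pc: "(f has_integral I (Suc m)) {p m..p (Suc m)}" using Suc.prems(2)[of "Suc m"] by simp
  have le: "p 0 \<le> p m" "p m \<le> p (Suc m)" using inc_le[OF assms(1)] Suc.prems(1) by auto
  have "(f has_integral (\<Sum>k=1..m. I k) + I (Suc m)) {p 0..p (Suc m)}"
    by (rule has_integral_combine[OF le ih pc])
  then show ?case by simp
qed

lemma pl_diff: "pl K p v s - pl K p w s = pl K p (\<lambda>j. v j - w j) s"
  unfolding pl_def by (simp add: sum_subtractf left_diff_distrib)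

lemma quad_piece:
  fixes \<alpha> \<beta> l r :: real
  assumes "l < r"
  shows "((\<lambda>s. (\<alpha> + (s - l) * ((\<beta> - \<alpha>) / (r - l)))\<^sup>2) has_integral (r - l) * (\<alpha>\<^sup>2 + \<alpha> * \<beta> + \<beta>\<^sup>2) / 3) {l..r}"
proof -
  define c where "c = (\<beta> - \<alpha>) / (r - l)"
  define G where "G = (\<lambda>s. \<alpha>\<^sup>2 * (s - l) + \<alpha> * c * (s - l)\<^sup>2 + c\<^sup>2 * (s - l) ^ 3 / 3)"
  have "((\<lambda>s. (\<alpha> + (s - l) * c)\<^sup>2) has_integral (G r - G l)) {l..r}"
  proof (rule fundamental_theorem_of_calculus)
    show "l \<le> r" using assms by simp
    fix x assume "x \<in> {l..r}"
    have "(G has_real_derivative (\<alpha> + (x - l) * c)\<^sup>2) (at x within {l..r})"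
      unfolding G_def
      by (rule derivative_eq_intros refl | simp)+ (simp add: power2_eq_square algebra_simps)
    then show "(G has_vector_derivative (\<alpha> + (x - l) * c)\<^sup>2) (at x within {l..r})"
      by (simp add: has_real_derivative_iff_has_vector_derivative)
  qed
  moreover have "G r - G l = (r - l) * (\<alpha>\<^sup>2 + \<alpha> * \<beta> + \<beta>\<^sup>2) / 3"
  proof -
    have cr: "c * (r - l) = \<beta> - \<alpha>" unfolding c_def using assms by simp
    have "G r - G l = \<alpha>\<^sup>2 * (r - l) + \<alpha> * (c * (r - l)) * (r - l) + (c * (r - l))\<^sup>2 * (r - l) / 3"
      unfolding G_def by (simp add: power2_eq_square power3_eq_cube algebra_simps)
    also have "\<dots> = (r - l) * (\<alpha>\<^sup>2 + \<alpha> * \<beta> + \<beta>\<^sup>2) / 3"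
      unfolding cr by (simp add: power2_eq_square field_simps)
    finally show ?thesis .
  qed
  ultimately show ?thesis unfolding c_def by simp
qed

definition Qf :: "nat \<Rightarrow> (nat \<Rightarrow> real) \<Rightarrow> (nat \<Rightarrow> real) \<Rightarrow> real" where
  "Qf K p d = (\<Sum>k=1..K. (p k - p (k - 1)) * ((d (k - 1))\<^sup>2 + d (k - 1) * d k + (d k)\<^sup>2) / 3)"

lemma pl_sq_integral:
  assumes "inc K p" "1 \<le> K"
  shows "((\<lambda>s. (pl K p d s)\<^sup>2) has_integral Qf K p d) {p 0..p K}"
  unfolding Qf_def
proof (rule piecewise_has_integral[OF assms(1) order_refl])
  fix k assume k: "1 \<le> k" "k \<le> K"
  have lt: "p (k - 1) < p k" using inc_step[OF assms(1) k] .
  show "((\<lambda>s. (pl K p d s)\<^sup>2) has_integral (p k - p (k - 1)) * ((d (k - 1))\<^sup>2 + d (k - 1) * d k + (d k)\<^sup>2) / 3) {p (k - 1)..p k}"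
  proof (rule has_integral_eq[OF _ quad_piece[OF lt]])
    fix s assume "s \<in> {p (k - 1)..p k}"
    then show "(d (k - 1) + (s - p (k - 1)) * ((d k - d (k - 1)) / (p k - p (k - 1))))\<^sup>2 = (pl K p d s)\<^sup>2"
      using pl_on[OF assms(1) k, of s d] by simp
  qed
qed

lemma dens_MEQ:
  assumes "inc K p" "1 \<le> K" "inc K e" "e 0 = a" "e K = b"
  shows "dens_meas a b (Ufun K p e) = distr (lebesgue_on {p 0..p K}) borel (pl K p e)"
  unfolding dens_meas_def using MEQ[OF assms(1,3,2)] assms(4,5) by simp

lemma fst_meas: "fst \<in> borel_measurable (borel :: (real \<times> real) measure)"
  by (rule borel_measurable_continuous_onI) (intro continuous_intros)
lemma snd_meas: "snd \<in> borel_measurable (borel :: (real \<times> real) measure)"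
  by (rule borel_measurable_continuous_onI) (intro continuous_intros)

lemma pl_sq_leb:
  assumes "inc K p" "1 \<le> K"
  shows "(\<integral>\<^sup>+ s. ennreal ((pl K p d s)\<^sup>2) \<partial>lebesgue_on {p 0..p K}) = ennreal (Qf K p d)"
    "integral\<^sup>L (lebesgue_on {p 0..p K}) (\<lambda>s. (pl K p d s)\<^sup>2) = Qf K p d"
proof -
  have c: "continuous_on {p 0..p K} (\<lambda>s. (pl K p d s)\<^sup>2)"
    by (intro continuous_intros pl_cont[OF assms])
  have i: "integrable (lebesgue_on {p 0..p K}) (\<lambda>s. (pl K p d s)\<^sup>2)" using cont_leb(1)[OF c] .
  have e: "integral\<^sup>L (lebesgue_on {p 0..p K}) (\<lambda>s. (pl K p d s)\<^sup>2) = Qf K p d"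
    using cont_leb(2)[OF c] pl_sq_integral[OF assms, of d] by (simp add: integral_unique)
  then show "integral\<^sup>L (lebesgue_on {p 0..p K}) (\<lambda>s. (pl K p d s)\<^sup>2) = Qf K p d" .
  show "(\<integral>\<^sup>+ s. ennreal ((pl K p d s)\<^sup>2) \<partial>lebesgue_on {p 0..p K}) = ennreal (Qf K p d)"
    using nn_integral_eq_integral[OF i] e by simp
qed

lemma couple_upper:
  assumes "inc K p" "1 \<le> K" "inc K ey" "inc K ez" "ey 0 = a" "ey K = b" "ez 0 = a" "ez K = b"
  defines "\<pi> \<equiv> distr (lebesgue_on {p 0..p K}) borel (\<lambda>s. (pl K p ey s, pl K p ez s))"
  shows "\<pi> \<in> couplings (dens_meas a b (Ufun K p ey)) (dens_meas a b (Ufun K p ez))"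
    "(\<integral>\<^sup>+ q. ennreal ((fst q - snd q)\<^sup>2) \<partial>\<pi>) = ennreal (Qf K p (\<lambda>j. ey j - ez j))"
proof -
  let ?L = "lebesgue_on {p 0..p K}"
  have mX: "pl K p ey \<in> borel_measurable ?L" using pl_meas[OF assms(1,2)] .
  have mZ: "pl K p ez \<in> borel_measurable ?L" using pl_meas[OF assms(1,2)] .
  have mXZ: "(\<lambda>s. (pl K p ey s, pl K p ez s)) \<in> borel_measurable ?L"
    using borel_measurable_Pair[OF mX mZ] .
  have "distr \<pi> borel fst = distr ?L borel (fst \<circ> (\<lambda>s. (pl K p ey s, pl K p ez s)))"
    unfolding \<pi>_def by (rule distr_distr[OF fst_meas mXZ])
  also have "\<dots> = distr ?L borel (pl K p ey)" by (simp add: comp_def)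
  also have "\<dots> = dens_meas a b (Ufun K p ey)" using dens_MEQ[OF assms(1,2,3,5,6)] by simp
  finally have 1: "distr \<pi> borel fst = dens_meas a b (Ufun K p ey)" .
  have "distr \<pi> borel snd = distr ?L borel (snd \<circ> (\<lambda>s. (pl K p ey s, pl K p ez s)))"
    unfolding \<pi>_def by (rule distr_distr[OF snd_meas mXZ])
  also have "\<dots> = distr ?L borel (pl K p ez)" by (simp add: comp_def)
  also have "\<dots> = dens_meas a b (Ufun K p ez)" using dens_MEQ[OF assms(1,2,4,7,8)] by simp
  finally have 2: "distr \<pi> borel snd = dens_meas a b (Ufun K p ez)" .
  have 3: "sets \<pi> = sets borel" unfolding \<pi>_def by simp
  show "\<pi> \<in> couplings (dens_meas a b (Ufun K p ey)) (dens_meas a b (Ufun K p ez))"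
    unfolding couplings_def using 1 2 3 by simp
  have "(\<integral>\<^sup>+ q. ennreal ((fst q - snd q)\<^sup>2) \<partial>\<pi>) = (\<integral>\<^sup>+ s. ennreal ((pl K p ey s - pl K p ez s)\<^sup>2) \<partial>?L)"
    unfolding \<pi>_def by (subst nn_integral_distr[OF mXZ]) (auto intro!: borel_measurable_continuous_onI continuous_intros)
  also have "\<dots> = (\<integral>\<^sup>+ s. ennreal ((pl K p (\<lambda>j. ey j - ez j) s)\<^sup>2) \<partial>?L)"
    by (simp add: pl_diff)
  also have "\<dots> = ennreal (Qf K p (\<lambda>j. ey j - ez j))" using pl_sq_leb(1)[OF assms(1,2)] .
  finally show "(\<integral>\<^sup>+ q. ennreal ((fst q - snd q)\<^sup>2) \<partial>\<pi>) = ennreal (Qf K p (\<lambda>j. ey j - ez j))" .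
qed

lemma W2_upper:
  assumes "inc K p" "1 \<le> K" "inc K ey" "inc K ez" "ey 0 = a" "ey K = b" "ez 0 = a" "ez K = b"
  shows "(INF \<pi> \<in> couplings (dens_meas a b (Ufun K p ey)) (dens_meas a b (Ufun K p ez)).
       \<integral>\<^sup>+ q. ennreal ((fst q - snd q)\<^sup>2) \<partial>\<pi>) \<le> ennreal (Qf K p (\<lambda>j. ey j - ez j))"
  using INF_lower[OF couple_upper(1)[OF assms], of "\<lambda>\<pi>. \<integral>\<^sup>+ q. ennreal ((fst q - snd q)\<^sup>2) \<partial>\<pi>"] couple_upper(2)[OF assms] by simp




locale twoX =
  fixes K :: nat and p ey ez :: "nat \<Rightarrow> real" and a b :: real
  assumes incp: "inc K p" and K1: "1 \<le> K" and incy: "inc K ey" and incz: "inc K ez"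
    and y0: "ey 0 = a" and yK: "ey K = b" and z0: "ez 0 = a" and zK: "ez K = b"
begin

abbreviation "X \<equiv> pl K p ey"
abbreviation "Z \<equiv> pl K p ez"
abbreviation "F \<equiv> pl K ey p"
abbreviation "G \<equiv> pl K ez p"
definition "T = (\<lambda>x. Z (F x))"
definition "\<Phi> = (\<lambda>x. integral {a..x} T)"
definition "f = (\<lambda>x. x\<^sup>2 - 2 * \<Phi> x)"
definition "g = (\<lambda>y. (X (G y) - y)\<^sup>2 - f (X (G y)))"
definition "cl = (\<lambda>x. max a (min b x))"

lemma ab: "a \<le> b" using inc_le[OF incy, of 0 K] y0 yK by simp
lemma p0K: "p 0 \<le> p K" using inc_le[OF incp, of 0 K] by simp

lemma F_range: "x \<in> {a..b} \<Longrightarrow> F x \<in> {p 0..p K}"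
  using pl_range[OF incy incp K1, of x] y0 yK by auto
lemma G_range: "x \<in> {a..b} \<Longrightarrow> G x \<in> {p 0..p K}"
  using pl_range[OF incz incp K1, of x] z0 zK by auto
lemma X_range: "s \<in> {p 0..p K} \<Longrightarrow> X s \<in> {a..b}"
  using pl_range[OF incp incy K1, of s] y0 yK by auto
lemma Z_range: "s \<in> {p 0..p K} \<Longrightarrow> Z s \<in> {a..b}"
  using pl_range[OF incp incz K1, of s] z0 zK by auto
lemma XF: "x \<in> {a..b} \<Longrightarrow> X (F x) = x"
  using pl_inv[OF incy incp K1, of x] y0 yK by auto
lemma FX: "s \<in> {p 0..p K} \<Longrightarrow> F (X s) = s"
  using pl_inv[OF incp incy K1, of s] by auto
lemma ZG: "x \<in> {a..b} \<Longrightarrow> Z (G x) = x"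
  using pl_inv[OF incz incp K1, of x] z0 zK by auto
lemma GZ: "s \<in> {p 0..p K} \<Longrightarrow> G (Z s) = s"
  using pl_inv[OF incp incz K1, of s] by auto

lemma cont_X: "continuous_on {p 0..p K} X" using pl_cont[OF incp K1] .
lemma cont_Z: "continuous_on {p 0..p K} Z" using pl_cont[OF incp K1] .
lemma cont_F: "continuous_on {a..b} F" using pl_cont[OF incy K1] y0 yK by simp
lemma cont_G: "continuous_on {a..b} G" using pl_cont[OF incz K1] z0 zK by simp

lemma cont_T: "continuous_on {a..b} T"
  unfolding T_def by (rule continuous_on_compose2[OF cont_Z cont_F]) (use F_range in auto)

lemma T_mono: "x \<in> {a..b} \<Longrightarrow> x' \<in> {a..b} \<Longrightarrow> x \<le> x' \<Longrightarrow> T x \<le> T x'"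
proof -
  assume x: "x \<in> {a..b}" "x' \<in> {a..b}" "x \<le> x'"
  have "F x \<le> F x'" using pl_mono[OF incy incp K1, of x x'] x y0 yK by auto
  then show "T x \<le> T x'" unfolding T_def using pl_mono[OF incp incz K1, of "F x" "F x'"] F_range x by auto
qed

lemma int_T: "T integrable_on {c..d}" if "{c..d} \<subseteq> {a..b}" for c d
  using integrable_on_subinterval[OF integrable_continuous_interval[OF cont_T] that] .

lemma Phi_conv:
  assumes x: "x \<in> {a..b}" "x' \<in> {a..b}"
  shows "T x' * (x - x') \<le> \<Phi> x - \<Phi> x'"
proof (cases "x' \<le> x")
  case True
  have "integral {a..x'} T + integral {x'..x} T = integral {a..x} T"
    by (rule Henstock_Kurzweil_Integration.integral_combine) (use x True int_T in auto)
  then have e: "\<Phi> x - \<Phi> x' = integral {x'..x} T" unfolding \<Phi>_def by simp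
  have "integral {x'..x} (\<lambda>t. T x') \<le> integral {x'..x} T"
    by (rule integral_le) (use x True int_T T_mono in auto)
  then show ?thesis using e True by (simp add: mult.commute)
next
  case False
  have "integral {a..x} T + integral {x..x'} T = integral {a..x'} T"
    by (rule Henstock_Kurzweil_Integration.integral_combine) (use x False int_T in auto)
  then have e: "\<Phi> x' - \<Phi> x = integral {x..x'} T" unfolding \<Phi>_def by simp
  have "integral {x..x'} T \<le> integral {x..x'} (\<lambda>t. T x')"
    by (rule integral_le) (use x False int_T T_mono in auto)
  then have "\<Phi> x' - \<Phi> x \<le> T x' * (x' - x)" using e False by (simp add: mult.commute)
  then show ?thesis by (simp add: algebra_simps)
qed

lemma fg_le:
  assumes x: "x \<in> {a..b}" and y: "y \<in> {a..b}"
  shows "f x + g y \<le> (x - y)\<^sup>2"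
proof -
  define q where "q = G y"
  have q: "q \<in> {p 0..p K}" using G_range[OF y] q_def by simp
  define x' where "x' = X q"
  have x': "x' \<in> {a..b}" using X_range[OF q] x'_def by simp
  have Tx': "T x' = y" unfolding T_def x'_def using FX[OF q] ZG[OF y] q_def by simp
  have c: "y * (x - x') \<le> \<Phi> x - \<Phi> x'" using Phi_conv[OF x x'] Tx' by simp
  have "f x + g y = x\<^sup>2 - 2 * \<Phi> x + (x' - y)\<^sup>2 - x'\<^sup>2 + 2 * \<Phi> x'"
    unfolding f_def g_def x'_def q_def by simp
  also have "\<dots> \<le> (x - y)\<^sup>2" using c by (simp add: power2_eq_square algebra_simps)
  finally show ?thesis .
qed

lemma fg_eq:
  assumes s: "s \<in> {p 0..p K}"
  shows "f (X s) + g (Z s) = (X s - Z s)\<^sup>2"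
  unfolding g_def using GZ[OF s] by simp

lemma cont_Phi: "continuous_on {a..b} \<Phi>"
  unfolding \<Phi>_def by (rule indefinite_integral_continuous_1[OF integrable_continuous_interval[OF cont_T]])

lemma cont_f: "continuous_on {a..b} f"
  unfolding f_def by (intro continuous_intros cont_Phi)

lemma cont_g: "continuous_on {a..b} g"
proof -
  have cXG: "continuous_on {a..b} (\<lambda>y. X (G y))"
    by (rule continuous_on_compose2[OF cont_X cont_G]) (use G_range in auto)
  have cfXG: "continuous_on {a..b} (\<lambda>y. f (X (G y)))"
    by (rule continuous_on_compose2[OF cont_f cXG]) (use G_range X_range in auto)
  show ?thesis unfolding g_def by (intro continuous_intros cXG cfXG)
qed

lemma cl_range: "cl x \<in> {a..b}" unfolding cl_def using ab by auto
lemma cl_id: "x \<in> {a..b} \<Longrightarrow> cl x = x" unfolding cl_def by auto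
lemma cl_cont: "continuous_on UNIV cl" unfolding cl_def by (intro continuous_intros)
lemma cl_lip: "(cl x - cl y)\<^sup>2 \<le> (x - y)\<^sup>2"
proof -
  have "\<bar>cl x - cl y\<bar> \<le> \<bar>x - y\<bar>" unfolding cl_def using ab by (auto simp: max_def min_def)
  then show ?thesis by (metis abs_ge_zero power2_abs power_mono)
qed

lemma cont_fc: "continuous_on UNIV (\<lambda>x. f (cl x))"
  by (rule continuous_on_compose2[OF cont_f cl_cont]) (use cl_range in auto)
lemma cont_gc: "continuous_on UNIV (\<lambda>x. g (cl x))"
  by (rule continuous_on_compose2[OF cont_g cl_cont]) (use cl_range in auto)

lemma bnd: fixes h :: "real \<Rightarrow> real" assumes "continuous_on {a..b} h" shows "\<exists>B. \<forall>x. \<bar>h (cl x)\<bar> \<le> B"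
proof -
  have "compact (h ` {a..b})" by (rule compact_continuous_image[OF assms]) simp
  then obtain B where B: "\<forall>v\<in>h ` {a..b}. norm v \<le> B" using compact_imp_bounded bounded_iff by metis
  show ?thesis using B cl_range by (intro exI[of _ B]) auto
qed

lemma lower:
  assumes pi: "\<pi> \<in> couplings (dens_meas a b (Ufun K p ey)) (dens_meas a b (Ufun K p ez))"
  shows "ennreal (Qf K p (\<lambda>j. ey j - ez j)) \<le> (\<integral>\<^sup>+ q. ennreal ((fst q - snd q)\<^sup>2) \<partial>\<pi>)"
proof -
  let ?L = "lebesgue_on {p 0..p K}"
  have s: "sets \<pi> = sets borel" and d1': "distr \<pi> borel fst = dens_meas a b (Ufun K p ey)"
    and d2': "distr \<pi> borel snd = dens_meas a b (Ufun K p ez)"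
    using pi unfolding couplings_def by auto
  have d1: "distr \<pi> borel fst = distr ?L borel X" using d1' dens_MEQ[OF incp K1 incy y0 yK] by simp
  have d2: "distr \<pi> borel snd = distr ?L borel Z" using d2' dens_MEQ[OF incp K1 incz z0 zK] by simp
  have sp: "space \<pi> = UNIV" using sets_eq_imp_space_eq[OF s] by simp
  have mfst: "fst \<in> measurable \<pi> borel" by (subst measurable_cong_sets[OF s refl]) (rule fst_meas)
  have msnd: "snd \<in> measurable \<pi> borel" by (subst measurable_cong_sets[OF s refl]) (rule snd_meas)
  interpret L: finite_measure ?L
    by (rule finite_measure_lebesgue_on) (metis cbox_interval lmeasurable_cbox)
  have mX: "X \<in> borel_measurable ?L" using pl_meas[OF incp K1] .
  have mZ: "Z \<in> borel_measurable ?L" using pl_meas[OF incp K1] .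
  interpret DX: finite_measure "distr ?L borel X" by (rule L.finite_measure_distr[OF mX])
  have "emeasure \<pi> (space \<pi>) = emeasure (distr \<pi> borel fst) UNIV"
    by (subst emeasure_distr[OF mfst]) (auto simp: sp)
  also have "\<dots> = emeasure (distr ?L borel X) (space (distr ?L borel X))" using d1 by simp
  also have "\<dots> \<noteq> \<infinity>" using DX.emeasure_finite by simp
  finally have "emeasure \<pi> (space \<pi>) \<noteq> \<infinity>" .
  then interpret P: finite_measure \<pi> by (rule finite_measureI)
  define fc where "fc = (\<lambda>x. f (cl x))"
  define gc where "gc = (\<lambda>x. g (cl x))"
  have mfc: "fc \<in> borel_measurable borel" unfolding fc_def by (rule borel_measurable_continuous_onI[OF cont_fc])
  have mgc: "gc \<in> borel_measurable borel" unfolding gc_def by (rule borel_measurable_continuous_onI[OF cont_gc])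
  obtain Bf where Bf: "\<And>x. \<bar>fc x\<bar> \<le> Bf" using bnd[OF cont_f] unfolding fc_def by blast
  obtain Bg where Bg: "\<And>x. \<bar>gc x\<bar> \<le> Bg" using bnd[OF cont_g] unfolding gc_def by blast
  have i1: "integrable \<pi> (\<lambda>q. fc (fst q))"
    by (rule P.integrable_const_bound[where B=Bf]) (use Bf measurable_compose[OF mfst mfc] in auto)
  have i2: "integrable \<pi> (\<lambda>q. gc (snd q))"
    by (rule P.integrable_const_bound[where B=Bg]) (use Bg measurable_compose[OF msnd mgc] in auto)
  have cfX: "continuous_on {p 0..p K} (\<lambda>s. f (X s))"
    by (rule continuous_on_compose2[OF cont_f cont_X]) (use X_range in auto)
  have cgZ: "continuous_on {p 0..p K} (\<lambda>s. g (Z s))"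
    by (rule continuous_on_compose2[OF cont_g cont_Z]) (use Z_range in auto)
  have I1: "integral\<^sup>L \<pi> (\<lambda>q. fc (fst q)) = integral\<^sup>L ?L (\<lambda>s. f (X s))"
  proof -
    have "integral\<^sup>L \<pi> (\<lambda>q. fc (fst q)) = integral\<^sup>L (distr \<pi> borel fst) fc"
      by (rule integral_distr[OF mfst mfc, symmetric])
    also have "\<dots> = integral\<^sup>L (distr ?L borel X) fc" using d1 by simp
    also have "\<dots> = integral\<^sup>L ?L (\<lambda>s. fc (X s))" by (rule integral_distr[OF mX mfc])
    also have "\<dots> = integral\<^sup>L ?L (\<lambda>s. f (X s))"
      by (rule Bochner_Integration.integral_cong) (use cl_id[OF X_range] in \<open>auto simp: fc_def\<close>)
    finally show ?thesis .
  qed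
  have I2: "integral\<^sup>L \<pi> (\<lambda>q. gc (snd q)) = integral\<^sup>L ?L (\<lambda>s. g (Z s))"
  proof -
    have "integral\<^sup>L \<pi> (\<lambda>q. gc (snd q)) = integral\<^sup>L (distr \<pi> borel snd) gc"
      by (rule integral_distr[OF msnd mgc, symmetric])
    also have "\<dots> = integral\<^sup>L (distr ?L borel Z) gc" using d2 by simp
    also have "\<dots> = integral\<^sup>L ?L (\<lambda>s. gc (Z s))" by (rule integral_distr[OF mZ mgc])
    also have "\<dots> = integral\<^sup>L ?L (\<lambda>s. g (Z s))"
      by (rule Bochner_Integration.integral_cong) (use cl_id[OF Z_range] in \<open>auto simp: gc_def\<close>)
    finally show ?thesis .
  qed
  define h where "h = (\<lambda>q. fc (fst q) + gc (snd q))"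
  have ih: "integrable \<pi> h" unfolding h_def using i1 i2 by simp
  have "integral\<^sup>L \<pi> h = integral\<^sup>L ?L (\<lambda>s. f (X s)) + integral\<^sup>L ?L (\<lambda>s. g (Z s))"
    unfolding h_def using I1 I2 i1 i2 by simp
  also have "\<dots> = integral\<^sup>L ?L (\<lambda>s. f (X s) + g (Z s))"
    using cont_leb(1)[OF cfX] cont_leb(1)[OF cgZ] by simp
  also have "\<dots> = integral\<^sup>L ?L (\<lambda>s. (pl K p (\<lambda>j. ey j - ez j) s)\<^sup>2)"
    by (rule Bochner_Integration.integral_cong) (auto simp: fg_eq pl_diff[symmetric])
  also have "\<dots> = Qf K p (\<lambda>j. ey j - ez j)" using pl_sq_leb(2)[OF incp K1] .
  finally have hQ: "integral\<^sup>L \<pi> h = Qf K p (\<lambda>j. ey j - ez j)" .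
  have hle: "h q \<le> (fst q - snd q)\<^sup>2" for q
  proof -
    have "h q \<le> (cl (fst q) - cl (snd q))\<^sup>2"
      unfolding h_def fc_def gc_def using fg_le[OF cl_range cl_range] .
    also have "\<dots> \<le> (fst q - snd q)\<^sup>2" using cl_lip .
    finally show ?thesis .
  qed
  have imax: "integrable \<pi> (\<lambda>q. max (h q) 0)" using ih by simp
  have "integral\<^sup>L \<pi> h \<le> integral\<^sup>L \<pi> (\<lambda>q. max (h q) 0)"
    by (rule integral_mono[OF ih imax]) simp
  then have "ennreal (integral\<^sup>L \<pi> h) \<le> ennreal (integral\<^sup>L \<pi> (\<lambda>q. max (h q) 0))"
    using ennreal_leI by blast
  also have "\<dots> = (\<integral>\<^sup>+ q. ennreal (max (h q) 0) \<partial>\<pi>)"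
    by (rule nn_integral_eq_integral[OF imax, symmetric]) simp
  also have "\<dots> \<le> (\<integral>\<^sup>+ q. ennreal ((fst q - snd q)\<^sup>2) \<partial>\<pi>)"
    by (rule nn_integral_mono) (use hle in \<open>auto intro!: ennreal_leI\<close>)
  finally show ?thesis using hQ by simp
qed

end




definition Wf :: "(real \<Rightarrow> real) \<Rightarrow> real \<Rightarrow> real \<Rightarrow> real" where
  "Wf V a t = integral {a..t} V"

definition CF :: "(real \<Rightarrow> real) \<Rightarrow> (real \<Rightarrow> real) \<Rightarrow> real \<Rightarrow> nat \<Rightarrow> (nat \<Rightarrow> real) \<Rightarrow> (nat \<Rightarrow> real) \<Rightarrow> real" where
  "CF \<phi> V a K p e = (\<Sum>k=1..K. (e k - e (k - 1)) * \<phi> ((p k - p (k - 1)) / (e k - e (k - 1)))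
       + (p k - p (k - 1)) / (e k - e (k - 1)) * (Wf V a (e k) - Wf V a (e (k - 1))))"

lemma Wf_diff:
  assumes "continuous_on {a..b} V" "a \<le> l" "l \<le> r" "r \<le> b"
  shows "(V has_integral (Wf V a r - Wf V a l)) {l..r}"
proof -
  have iV: "V integrable_on {a..r}"
    by (rule integrable_on_subinterval[OF integrable_continuous_interval[OF assms(1)]]) (use assms in auto)
  have "integral {a..l} V + integral {l..r} V = integral {a..r} V"
    by (rule Henstock_Kurzweil_Integration.integral_combine) (use assms iV in auto)
  moreover have "V integrable_on {l..r}"
    by (rule integrable_on_subinterval[OF integrable_continuous_interval[OF assms(1)]]) (use assms in auto)
  ultimately show ?thesis unfolding Wf_def by (metis add_diff_cancel_left' has_integral_integral)
qed

locale Eset =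
  fixes K :: nat and p e :: "nat \<Rightarrow> real" and a b :: real and V :: "real \<Rightarrow> real"
  assumes incp: "inc K p" and K1: "1 \<le> K" and ince: "inc K e"
    and e0: "e 0 = a" and eK: "e K = b" and Vc: "continuous_on {a..b} V"
begin

lemma ab: "a \<le> b" using inc_le[OF ince, of 0 K] e0 eK by simp

lemma e_range: "k \<le> K \<Longrightarrow> a \<le> e k \<and> e k \<le> b"
  using inc_le[OF ince, of 0 k] inc_le[OF ince, of k K] e0 eK by auto

lemma U_piece: "1 \<le> k \<Longrightarrow> k \<le> K \<Longrightarrow> t \<in> {e (k - 1)..e k} - {e (k - 1)} \<Longrightarrow>
    Ufun K p e t = (p k - p (k - 1)) / (e k - e (k - 1))"
  unfolding Ufun_def using u_val[OF ince, of k t] by auto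

lemma int_phi: "((\<lambda>t. \<phi> (Ufun K p e t)) has_integral
    (\<Sum>k=1..K. (e k - e (k - 1)) * \<phi> ((p k - p (k - 1)) / (e k - e (k - 1))))) {a..b}"
proof -
  have "((\<lambda>t. \<phi> (Ufun K p e t)) has_integral
    (\<Sum>k=1..K. (e k - e (k - 1)) * \<phi> ((p k - p (k - 1)) / (e k - e (k - 1))))) {e 0..e K}"
  proof (rule piecewise_has_integral[OF ince order_refl])
    fix k assume k: "1 \<le> k" "k \<le> K"
    have lt: "e (k - 1) < e k" using inc_step[OF ince k] .
    have c: "((\<lambda>t. \<phi> ((p k - p (k - 1)) / (e k - e (k - 1)))) has_integral
        (e k - e (k - 1)) * \<phi> ((p k - p (k - 1)) / (e k - e (k - 1)))) {e (k - 1)..e k}"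
      using has_integral_const_real[of "\<phi> ((p k - p (k - 1)) / (e k - e (k - 1)))" "e (k - 1)" "e k"] lt by simp
    show "((\<lambda>t. \<phi> (Ufun K p e t)) has_integral (e k - e (k - 1)) * \<phi> ((p k - p (k - 1)) / (e k - e (k - 1)))) {e (k - 1)..e k}"
      by (rule has_integral_spike_finite[OF _ _ c, of "{e (k - 1)}"]) (use U_piece[OF k] in auto)
  qed
  then show ?thesis using e0 eK by simp
qed

lemma int_UV: "((\<lambda>t. Ufun K p e t * V t) has_integral
    (\<Sum>k=1..K. (p k - p (k - 1)) / (e k - e (k - 1)) * (Wf V a (e k) - Wf V a (e (k - 1))))) {a..b}"
proof -
  have "((\<lambda>t. Ufun K p e t * V t) has_integral
    (\<Sum>k=1..K. (p k - p (k - 1)) / (e k - e (k - 1)) * (Wf V a (e k) - Wf V a (e (k - 1))))) {e 0..e K}"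
  proof (rule piecewise_has_integral[OF ince order_refl])
    fix k assume k: "1 \<le> k" "k \<le> K"
    have lt: "e (k - 1) < e k" using inc_step[OF ince k] .
    have r: "a \<le> e (k - 1)" "e k \<le> b" using e_range k by auto
    have c: "((\<lambda>t. (p k - p (k - 1)) / (e k - e (k - 1)) * V t) has_integral
        (p k - p (k - 1)) / (e k - e (k - 1)) * (Wf V a (e k) - Wf V a (e (k - 1)))) {e (k - 1)..e k}"
      by (rule has_integral_mult_right[OF Wf_diff[OF Vc]]) (use r lt in auto)
    show "((\<lambda>t. Ufun K p e t * V t) has_integral (p k - p (k - 1)) / (e k - e (k - 1)) * (Wf V a (e k) - Wf V a (e (k - 1)))) {e (k - 1)..e k}"
      by (rule has_integral_spike_finite[OF _ _ c, of "{e (k - 1)}"]) (use U_piece[OF k] in auto)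
  qed
  then show ?thesis using e0 eK by simp
qed

lemma Econt_CF: "E_cont \<phi> V a b (Ufun K p e) = CF \<phi> V a K p e"
  unfolding E_cont_def CF_def using integral_unique[OF int_phi] integral_unique[OF int_UV]
  by (simp add: sum.distrib)

lemma piece_V:
  assumes k: "1 \<le> k" "k \<le> K"
  shows "((\<lambda>s. V (pl K p e s)) has_integral
     (p k - p (k - 1)) / (e k - e (k - 1)) * (Wf V a (e k) - Wf V a (e (k - 1)))) {p (k - 1)..p k}"
proof -
  define l where "l = p (k - 1)"
  define r where "r = p k"
  define \<alpha> where "\<alpha> = e (k - 1)"
  define \<beta> where "\<beta> = e k"
  have lr: "l < r" unfolding l_def r_def using inc_step[OF incp k] .
  have ab': "\<alpha> < \<beta>" unfolding \<alpha>_def \<beta>_def using inc_step[OF ince k] .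
  have rng: "a \<le> \<alpha>" "\<beta> \<le> b" unfolding \<alpha>_def \<beta>_def using e_range k by auto
  define c where "c = (\<beta> - \<alpha>) / (r - l)"
  have cpos: "c > 0" unfolding c_def using lr ab' by simp
  define A where "A = (\<lambda>s. \<alpha> + (s - l) * c)"
  have Al: "A l = \<alpha>" and Ar: "A r = \<beta>" unfolding A_def c_def using lr by auto
  have Arng: "A s \<in> {a..b}" if "s \<in> {l..r}" for s
  proof -
    have "0 \<le> (s - l) * c" "(s - l) * c \<le> (r - l) * c" using that cpos by (auto intro: mult_right_mono)
    moreover have "(r - l) * c = \<beta> - \<alpha>" unfolding c_def using lr by simp
    ultimately show ?thesis unfolding A_def using rng by auto
  qed
  define H where "H = (\<lambda>s. Wf V a (A s) / c)"
  have "((\<lambda>s. V (A s)) has_integral (H r - H l)) {l..r}"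
  proof (rule fundamental_theorem_of_calculus)
    show "l \<le> r" using lr by simp
    fix x assume x: "x \<in> {l..r}"
    have dA: "(A has_real_derivative c) (at x within {l..r})"
      unfolding A_def by (auto intro!: derivative_eq_intros)
    have dW: "(Wf V a has_real_derivative V (A x)) (at (A x) within {a..b})"
      unfolding Wf_def by (rule integral_has_real_derivative[OF Vc Arng[OF x]])
    have dW': "(Wf V a has_real_derivative V (A x)) (at (A x) within A ` {l..r})"
      by (rule DERIV_subset[OF dW]) (use Arng in auto)
    have "(Wf V a \<circ> A has_real_derivative V (A x) * c) (at x within {l..r})"
      by (rule DERIV_image_chain[OF dW' dA])
    then have "((\<lambda>s. (Wf V a \<circ> A) s / c) has_real_derivative V (A x) * c / c) (at x within {l..r})"
      by (rule DERIV_cdivide)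
    then show "(H has_vector_derivative V (A x)) (at x within {l..r})"
      unfolding H_def using cpos by (simp add: has_real_derivative_iff_has_vector_derivative comp_def)
  qed
  moreover have "H r - H l = (r - l) / (\<beta> - \<alpha>) * (Wf V a \<beta> - Wf V a \<alpha>)"
  proof -
    have "H r - H l = (Wf V a \<beta> - Wf V a \<alpha>) / c" unfolding H_def Al Ar by (simp add: diff_divide_distrib)
    also have "\<dots> = (r - l) / (\<beta> - \<alpha>) * (Wf V a \<beta> - Wf V a \<alpha>)" unfolding c_def using lr ab' by simp
    finally show ?thesis .
  qed
  ultimately have "((\<lambda>s. V (A s)) has_integral (r - l) / (\<beta> - \<alpha>) * (Wf V a \<beta> - Wf V a \<alpha>)) {l..r}" by simp
  then have "((\<lambda>s. V (pl K p e s)) has_integral (r - l) / (\<beta> - \<alpha>) * (Wf V a \<beta> - Wf V a \<alpha>)) {l..r}"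
  proof (rule has_integral_eq[rotated])
    fix s assume "s \<in> {l..r}"
    then show "V (A s) = V (pl K p e s)"
      unfolding A_def c_def l_def r_def \<alpha>_def \<beta>_def using pl_on[OF incp k, of s e] by (simp add: times_divide_eq_right)
  qed
  then show ?thesis unfolding l_def r_def \<alpha>_def \<beta>_def .
qed

lemma int_VX: "((\<lambda>s. V (pl K p e s)) has_integral
    (\<Sum>k=1..K. (p k - p (k - 1)) / (e k - e (k - 1)) * (Wf V a (e k) - Wf V a (e (k - 1))))) {p 0..p K}"
  by (rule piecewise_has_integral[OF incp order_refl piece_V])

end




lemma Edisc_CF:
  assumes mesh: "is_mesh M K \<xi>" and K1: "1 \<le> K" and x: "x \<in> xset a b K" and Vc: "continuous_on {a..b} V"
  shows "E_disc \<phi> V a b M K \<xi> x = CF \<phi> V a K \<xi> (ext_vec a b K x)"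
proof -
  let ?e = "ext_vec a b K x"
  have incp: "inc K \<xi>" using mesh_inc[OF mesh] .
  have ince: "inc K ?e" using ext_inc[OF x] .
  interpret Eset K \<xi> ?e a b V using incp K1 ince Vc by unfold_locales auto
  have m0: "\<xi> 0 = 0" "\<xi> K = M" using mesh unfolding is_mesh_def by auto
  have s1: "(\<Sum>k=1..K. mesh_delta \<xi> k *
        (let s = (?e k - ?e (k - 1)) / mesh_delta \<xi> k in s * \<phi> (1 / s))) =
      (\<Sum>k=1..K. (?e k - ?e (k - 1)) * \<phi> ((\<xi> k - \<xi> (k - 1)) / (?e k - ?e (k - 1))))"
  proof (rule sum.cong[OF refl])
    fix k assume k: "k \<in> {1..K}"
    have "\<xi> (k - 1) < \<xi> k" using inc_step[OF incp] k by auto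
    then show "mesh_delta \<xi> k * (let s = (?e k - ?e (k - 1)) / mesh_delta \<xi> k in s * \<phi> (1 / s)) =
      (?e k - ?e (k - 1)) * \<phi> ((\<xi> k - \<xi> (k - 1)) / (?e k - ?e (k - 1)))"
      unfolding mesh_delta_def Let_def by simp
  qed
  have s2: "integral {0..M} (\<lambda>s. V (X_xi a b K \<xi> x s)) =
     (\<Sum>k=1..K. (\<xi> k - \<xi> (k - 1)) / (?e k - ?e (k - 1)) * (Wf V a (?e k) - Wf V a (?e (k - 1))))"
    using integral_unique[OF int_VX] m0 unfolding X_pl by simp
  show ?thesis unfolding E_disc_def CF_def s1 s2 by (simp add: sum.distrib)
qed

lemma ext_upd: "1 \<le> k \<Longrightarrow> k < K \<Longrightarrow> ext_vec a b K (x(k:=t)) j = (if j = k then t else ext_vec a b K x j)"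
  unfolding ext_vec_def by auto

lemma xset_upd:
  assumes x: "x \<in> xset a b K" and k: "1 \<le> k" "k < K"
    and t: "ext_vec a b K x (k - 1) < t" "t < ext_vec a b K x (k + 1)"
  shows "x(k:=t) \<in> xset a b K"
  unfolding xset_def
proof (intro CollectI allI impI)
  fix j assume j: "1 \<le> j \<and> j \<le> K"
  have xs: "ext_vec a b K x (j - 1) < ext_vec a b K x j" using x j unfolding xset_def by auto
  show "ext_vec a b K (x(k := t)) (j - 1) < ext_vec a b K (x(k := t)) j"
  proof (cases "j = k")
    case True
    then show ?thesis using t ext_upd[OF k, of a b x t] k by simp
  next
    case False
    show ?thesis
    proof (cases "j = k + 1")
      case True
      then show ?thesis using t ext_upd[OF k, of a b x t] k by simp
    next
      case False2: False
      have "j - 1 \<noteq> k" using False2 j by auto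
      then show ?thesis using xs False ext_upd[OF k, of a b x t] by simp
    qed
  qed
qed

lemma Wf_at:
  assumes Vc: "continuous_on {a..b} V" and y: "a < y" "y < b"
  shows "(Wf V a has_real_derivative V y) (at y)"
proof -
  have "(Wf V a has_real_derivative V y) (at y within {a..b})"
    unfolding Wf_def by (rule integral_has_real_derivative[OF Vc]) (use y in auto)
  then have "(Wf V a has_real_derivative V y) (at y within {a<..<b})"
    by (rule DERIV_subset) auto
  then show ?thesis using at_within_open[of y "{a<..<b}"] y by simp
qed

lemma CF_diff:
  assumes x: "x \<in> xset a b K" and k: "1 \<le> k" "k < K" and incp: "inc K p"
    and Vc: "continuous_on {a..b} V" and phid: "\<And>r. r > 0 \<Longrightarrow> \<phi> differentiable (at r)"
  shows "(\<lambda>t. CF \<phi> V a K p (ext_vec a b K (x(k:=t)))) differentiable (at (x k))"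
proof -
  let ?e = "ext_vec a b K x"
  let ?E = "\<lambda>t i. ext_vec a b K (x(k:=t)) i"
  have K1: "1 \<le> K" using k by simp
  have ince: "inc K ?e" using ext_inc[OF x] .
  have E0: "?E (x k) i = ?e i" for i by simp
  have dE: "(\<lambda>t. ?E t i) differentiable (at (x k))" for i
  proof (cases "i = k")
    case True then show ?thesis using ext_upd[OF k, of a b x] by simp
  next
    case False then show ?thesis using ext_upd[OF k, of a b x] by simp
  qed
  have xk: "a < x k" "x k < b"
  proof -
    have "?e 0 < ?e k" "?e k < ?e K" using inc_lt[OF ince, of 0 k] inc_lt[OF ince, of k K] k by auto
    then show "a < x k" "x k < b" using k unfolding ext_vec_def by auto
  qed
  have dWE: "(\<lambda>t. Wf V a (?E t i)) differentiable (at (x k))" for i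
  proof (cases "i = k")
    case True
    have "Wf V a differentiable (at (x k))"
      using Wf_at[OF Vc xk] unfolding real_differentiable_def by blast
    then show ?thesis using True ext_upd[OF k, of a b x] by simp
  next
    case False then show ?thesis using ext_upd[OF k, of a b x] by simp
  qed
  have dterm: "(\<lambda>t. (?E t j - ?E t (j - 1)) * \<phi> ((p j - p (j - 1)) / (?E t j - ?E t (j - 1)))
       + (p j - p (j - 1)) / (?E t j - ?E t (j - 1)) * (Wf V a (?E t j) - Wf V a (?E t (j - 1))))
       differentiable (at (x k))" if j: "j \<in> {1..K}" for j
  proof -
    have pos: "?e (j - 1) < ?e j" "p (j - 1) < p j" using inc_step[OF ince] inc_step[OF incp] j by auto
    have dd: "(\<lambda>t. ?E t j - ?E t (j - 1)) differentiable (at (x k))"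
      using dE[of j] dE[of "j - 1"] by (rule differentiable_diff)
    have dq: "(\<lambda>t. (p j - p (j - 1)) / (?E t j - ?E t (j - 1))) differentiable (at (x k))"
      by (rule differentiable_divide[OF differentiable_const dd]) (use pos in simp)
    have "\<phi> differentiable (at ((p j - p (j - 1)) / (?E (x k) j - ?E (x k) (j - 1))))"
      by (rule phid) (use pos in simp)
    then have dphi: "(\<lambda>t. \<phi> ((p j - p (j - 1)) / (?E t j - ?E t (j - 1)))) differentiable (at (x k))"
      by (rule differentiable_compose[OF _ dq])
    show ?thesis
      by (intro differentiable_add differentiable_mult dd dphi dq differentiable_diff dWE)
  qed
  show ?thesis unfolding CF_def by (rule differentiable_sum) (use dterm in auto)
qed




lemma sum_ext0:
  fixes h :: "nat \<Rightarrow> real"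
  assumes "1 \<le> K" "h 0 = 0" "h K = 0"
  shows "(\<Sum>j=1..K-1. h j) = (\<Sum>j=0..K. h j)"
proof -
  have "{0..K} = insert 0 (insert K {1..K-1})" using assms(1) by auto
  moreover have "0 \<notin> insert K {1..K-1}" "K \<notin> {1..K-1}" using assms(1) by auto
  ultimately show ?thesis using assms by simp
qed

lemma W_row:
  assumes K1: "1 \<le> K" and i: "1 \<le> i" "i < K" and z: "z 0 = 0" "z K = 0"
  shows "(\<Sum>j=1..K-1. Wmat \<xi> i j * z j) =
     (mesh_delta \<xi> i + mesh_delta \<xi> (i + 1)) / 3 * z i + mesh_delta \<xi> (i + 1) / 6 * z (i + 1)
      + mesh_delta \<xi> i / 6 * z (i - 1)"
proof -
  have "(\<Sum>j=1..K-1. Wmat \<xi> i j * z j) = (\<Sum>j=0..K. Wmat \<xi> i j * z j)"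
    by (rule sum_ext0) (use K1 z in auto)
  also have "\<dots> = (\<Sum>j\<in>{i - 1, i, i + 1}. Wmat \<xi> i j * z j)"
    by (rule sum.mono_neutral_right) (use i in \<open>auto simp: Wmat_def\<close>)
  also have "\<dots> = Wmat \<xi> i (i - 1) * z (i - 1) + Wmat \<xi> i i * z i + Wmat \<xi> i (i + 1) * z (i + 1)"
  proof -
    have "i - 1 \<noteq> i" "i - 1 \<noteq> i + 1" "i \<noteq> i + 1" using i by auto
    then show ?thesis by (simp add: algebra_simps)
  qed
  also have "\<dots> = (mesh_delta \<xi> i + mesh_delta \<xi> (i + 1)) / 3 * z i + mesh_delta \<xi> (i + 1) / 6 * z (i + 1)
      + mesh_delta \<xi> i / 6 * z (i - 1)"
  proof -
    have "i - 1 \<noteq> i" "i - 1 \<noteq> i + 1" "i \<noteq> i + 1" "i = i - 1 + 1" using i by auto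
    then show ?thesis unfolding Wmat_def by (simp add: algebra_simps)
  qed
  finally show ?thesis .
qed

lemma quad_id:
  assumes K1: "1 \<le> K" and z: "z 0 = 0" "z K = 0"
  shows "(\<Sum>i=1..K-1. z i * (\<Sum>j=1..K-1. Wmat \<xi> i j * z j)) = Qf K \<xi> z"
proof -
  let ?d = "mesh_delta \<xi>"
  have "(\<Sum>i=1..K-1. z i * (\<Sum>j=1..K-1. Wmat \<xi> i j * z j)) =
     (\<Sum>i=1..K-1. ?d i * (z i)\<^sup>2 / 3 + ?d (i + 1) * (z i)\<^sup>2 / 3 + ?d (i + 1) * z i * z (i + 1) / 6
        + ?d i * z (i - 1) * z i / 6)"
    by (rule sum.cong[OF refl]) (use W_row[OF K1 _ _ z] in \<open>auto simp: power2_eq_square algebra_simps\<close>)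
  also have "\<dots> = (\<Sum>i=1..K-1. ?d i * (z i)\<^sup>2 / 3) + (\<Sum>i=1..K-1. ?d (i + 1) * (z i)\<^sup>2 / 3)
       + (\<Sum>i=1..K-1. ?d (i + 1) * z i * z (i + 1) / 6) + (\<Sum>i=1..K-1. ?d i * z (i - 1) * z i / 6)"
    by (simp add: sum.distrib)
  also have "(\<Sum>i=1..K-1. ?d i * (z i)\<^sup>2 / 3) = (\<Sum>k=1..K. ?d k * (z k)\<^sup>2 / 3)"
  proof -
    have "{1..K} = insert K {1..K-1}" "K \<notin> {1..K-1}" using K1 by auto
    then show ?thesis using z by simp
  qed
  also have "(\<Sum>i=1..K-1. ?d (i + 1) * (z i)\<^sup>2 / 3) = (\<Sum>k=1..K. ?d k * (z (k - 1))\<^sup>2 / 3)"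
  proof -
    have "(\<Sum>i=1..K-1. ?d (i + 1) * (z i)\<^sup>2 / 3) = (\<Sum>i=0..K-1. ?d (i + 1) * (z i)\<^sup>2 / 3)"
    proof -
      have "{0..K-1} = insert 0 {1..K-1}" "0 \<notin> {1..K-1}" by auto
      then show ?thesis using z by simp
    qed
    also have "\<dots> = (\<Sum>k=1..K. ?d k * (z (k - 1))\<^sup>2 / 3)"
      by (rule sum.reindex_bij_witness[of _ "\<lambda>k. k - 1" "\<lambda>i. i + 1"]) (use K1 in auto)
    finally show ?thesis .
  qed
  also have "(\<Sum>i=1..K-1. ?d (i + 1) * z i * z (i + 1) / 6) = (\<Sum>k=1..K. ?d k * z (k - 1) * z k / 6)"
  proof -
    have "(\<Sum>i=1..K-1. ?d (i + 1) * z i * z (i + 1) / 6) = (\<Sum>i=0..K-1. ?d (i + 1) * z i * z (i + 1) / 6)"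
    proof -
      have "{0..K-1} = insert 0 {1..K-1}" "0 \<notin> {1..K-1}" by auto
      then show ?thesis using z by simp
    qed
    also have "\<dots> = (\<Sum>k=1..K. ?d k * z (k - 1) * z k / 6)"
      by (rule sum.reindex_bij_witness[of _ "\<lambda>k. k - 1" "\<lambda>i. i + 1"]) (use K1 in auto)
    finally show ?thesis .
  qed
  also have "(\<Sum>i=1..K-1. ?d i * z (i - 1) * z i / 6) = (\<Sum>k=1..K. ?d k * z (k - 1) * z k / 6)"
  proof -
    have "{1..K} = insert K {1..K-1}" "K \<notin> {1..K-1}" using K1 by auto
    then show ?thesis using z by simp
  qed
  finally have "(\<Sum>i=1..K-1. z i * (\<Sum>j=1..K-1. Wmat \<xi> i j * z j)) =
      (\<Sum>k=1..K. ?d k * (z k)\<^sup>2 / 3) + (\<Sum>k=1..K. ?d k * (z (k - 1))\<^sup>2 / 3)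
       + (\<Sum>k=1..K. ?d k * z (k - 1) * z k / 6) + (\<Sum>k=1..K. ?d k * z (k - 1) * z k / 6)" .
  also have "\<dots> = Qf K \<xi> z"
    unfolding Qf_def mesh_delta_def sum.distrib[symmetric]
    by (rule sum.cong[OF refl]) (simp add: power2_eq_square field_simps)
  finally show ?thesis .
qed

lemma tri_eq: "(\<alpha>::real)\<^sup>2 + \<alpha> * \<beta> + \<beta>\<^sup>2 = (\<alpha>\<^sup>2 + \<beta>\<^sup>2 + (\<alpha> + \<beta>)\<^sup>2) / 2"
  by (simp add: power2_eq_square field_simps)

lemma tri_nonneg: "0 \<le> (\<alpha>::real)\<^sup>2 + \<alpha> * \<beta> + \<beta>\<^sup>2"
  unfolding tri_eq by simp

lemma tri_zero: "(\<alpha>::real)\<^sup>2 + \<alpha> * \<beta> + \<beta>\<^sup>2 = 0 \<Longrightarrow> \<alpha> = 0 \<and> \<beta> = 0"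
proof -
  assume h: "\<alpha>\<^sup>2 + \<alpha> * \<beta> + \<beta>\<^sup>2 = 0"
  have "\<alpha>\<^sup>2 + \<beta>\<^sup>2 + (\<alpha> + \<beta>)\<^sup>2 = 0" using h unfolding tri_eq by simp
  then have "\<alpha>\<^sup>2 = 0" "\<beta>\<^sup>2 = 0" by (smt (verit) zero_le_power2)+
  then show ?thesis by simp
qed

lemma Qf_nonneg: "inc K p \<Longrightarrow> 0 \<le> Qf K p d"
  unfolding Qf_def
proof (rule sum_nonneg)
  fix k assume "inc K p" "k \<in> {1..K}"
  then have "p (k - 1) < p k" using inc_step by auto
  then show "0 \<le> (p k - p (k - 1)) * ((d (k - 1))\<^sup>2 + d (k - 1) * d k + (d k)\<^sup>2) / 3"
    using tri_nonneg[of "d (k - 1)" "d k"] by simp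
qed

lemma Qf_zero:
  assumes "inc K p" "Qf K p d = 0" "1 \<le> k" "k \<le> K"
  shows "d k = 0"
proof -
  define T where "T = (\<lambda>j. (p j - p (j - 1)) * ((d (j - 1))\<^sup>2 + d (j - 1) * d j + (d j)\<^sup>2) / 3)"
  have nn: "0 \<le> T j" if "j \<in> {1..K}" for j
  proof -
    have "p (j - 1) < p j" using inc_step assms(1) that by auto
    then show "0 \<le> T j" unfolding T_def using tri_nonneg[of "d (j - 1)" "d j"] by simp
  qed
  have "sum T {1..K} = 0" using assms(2) unfolding Qf_def T_def by simp
  then have "\<forall>j\<in>{1..K}. T j = 0" using sum_nonneg_eq_0_iff[of "{1..K}" T] nn by auto
  then have "T k = 0" using assms(3,4) by auto
  moreover have "p (k - 1) < p k" using inc_step assms by auto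
  ultimately have "(d (k - 1))\<^sup>2 + d (k - 1) * d k + (d k)\<^sup>2 = 0" unfolding T_def by simp
  then show ?thesis using tri_zero by blast
qed


lemma trider:
  assumes u: "(u has_real_derivative u') (at t0)" and v: "(v has_real_derivative v') (at t0)"
  shows "((\<lambda>t. c * ((u t)\<^sup>2 + u t * v t + (v t)\<^sup>2) / 3) has_real_derivative
           c * (2 * u t0 * u' + u' * v t0 + u t0 * v' + 2 * v t0 * v') / 3) (at t0)"
  by (rule derivative_eq_intros u v refl | simp add: algebra_simps)+

lemma Q_deriv:
  fixes a b :: real and K k :: nat and x x' \<xi> :: "nat \<Rightarrow> real"
  assumes k: "1 \<le> k" "k < K"
  defines "d0 \<equiv> (\<lambda>i. ext_vec a b K x i - ext_vec a b K x' i)"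
  shows "((\<lambda>t. Qf K \<xi> (\<lambda>i. ext_vec a b K (x(k:=t)) i - ext_vec a b K x' i)) has_real_derivative
      2 * (\<Sum>j=1..K-1. Wmat \<xi> k j * d0 j)) (at (x k))"
proof -
  have K1: "1 \<le> K" using k by simp
  let ?D = "\<lambda>t i. ext_vec a b K (x(k:=t)) i - ext_vec a b K x' i"
  define D' where "D' = (\<lambda>i. if i = k then 1 else (0::real))"
  have dD: "((\<lambda>t. ?D t i) has_real_derivative D' i) (at (x k))" for i
  proof (cases "i = k")
    case True
    then show ?thesis unfolding D'_def using ext_upd[OF k, of a b x]
      by (auto intro!: derivative_eq_intros)
  next
    case False
    then show ?thesis unfolding D'_def using ext_upd[OF k, of a b x]
      by (auto intro!: derivative_eq_intros)
  qed
  have D0: "?D (x k) i = d0 i" for i unfolding d0_def by simp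
  have "((\<lambda>t. Qf K \<xi> (?D t)) has_real_derivative
      (\<Sum>j=1..K. (\<xi> j - \<xi> (j - 1)) * (2 * d0 (j - 1) * D' (j - 1) + D' (j - 1) * d0 j + d0 (j - 1) * D' j + 2 * d0 j * D' j) / 3)) (at (x k))"
    unfolding Qf_def
    by (rule DERIV_sum, rule trider[OF dD dD, unfolded D0])
  moreover have "(\<Sum>j=1..K. (\<xi> j - \<xi> (j - 1)) * (2 * d0 (j - 1) * D' (j - 1) + D' (j - 1) * d0 j + d0 (j - 1) * D' j + 2 * d0 j * D' j) / 3)
      = 2 * (\<Sum>j=1..K-1. Wmat \<xi> k j * d0 j)"
  proof -
    have "(\<Sum>j=1..K. (\<xi> j - \<xi> (j - 1)) * (2 * d0 (j - 1) * D' (j - 1) + D' (j - 1) * d0 j + d0 (j - 1) * D' j + 2 * d0 j * D' j) / 3)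
       = (\<Sum>j=1..K. (if j = k then (\<xi> k - \<xi> (k - 1)) * (d0 (k - 1) + 2 * d0 k) / 3 else 0)
                  + (if j = k + 1 then (\<xi> (k + 1) - \<xi> k) * (2 * d0 k + d0 (k + 1)) / 3 else 0))"
    proof (rule sum.cong[OF refl])
      fix j assume j: "j \<in> {1..K}"
      show "(\<xi> j - \<xi> (j - 1)) * (2 * d0 (j - 1) * D' (j - 1) + D' (j - 1) * d0 j + d0 (j - 1) * D' j + 2 * d0 j * D' j) / 3 =
         (if j = k then (\<xi> k - \<xi> (k - 1)) * (d0 (k - 1) + 2 * d0 k) / 3 else 0)
                  + (if j = k + 1 then (\<xi> (k + 1) - \<xi> k) * (2 * d0 k + d0 (k + 1)) / 3 else 0)"
      proof (cases "j = k")
        case True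
        then have "j - 1 \<noteq> k" "j \<noteq> k + 1" using k by auto
        then show ?thesis using True unfolding D'_def by (simp add: algebra_simps)
      next
        case False
        show ?thesis
        proof (cases "j = k + 1")
          case True
          then have "j - 1 = k" by simp
          then show ?thesis using True False unfolding D'_def by (simp add: algebra_simps)
        next
          case False2: False
          then have "j - 1 \<noteq> k" using j by auto
          then show ?thesis using False False2 unfolding D'_def by simp
        qed
      qed
    qed
    also have "\<dots> = (\<xi> k - \<xi> (k - 1)) * (d0 (k - 1) + 2 * d0 k) / 3 + (\<xi> (k + 1) - \<xi> k) * (2 * d0 k + d0 (k + 1)) / 3"
      using k by (simp add: sum.distrib)
    also have "\<dots> = 2 * (\<Sum>j=1..K-1. Wmat \<xi> k j * d0 j)"
    proof -
      have z: "d0 0 = 0" "d0 K = 0" unfolding d0_def using K1 by auto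
      show ?thesis unfolding W_row[OF K1 k z] mesh_delta_def by (simp add: field_simps)
    qed
    finally show ?thesis .
  qed
  ultimately show ?thesis by simp
qed




context twoX
begin

lemma W2_sq: "(W2 a b (Ufun K p ey) (Ufun K p ez))\<^sup>2 = Qf K p (\<lambda>j. ey j - ez j)"
proof -
  let ?I = "INF \<pi> \<in> couplings (dens_meas a b (Ufun K p ey)) (dens_meas a b (Ufun K p ez)).
       \<integral>\<^sup>+ q. ennreal ((fst q - snd q)\<^sup>2) \<partial>\<pi>"
  have up: "?I \<le> ennreal (Qf K p (\<lambda>j. ey j - ez j))"
    using W2_upper[OF incp K1 incy incz y0 yK z0 zK] .
  have lo: "ennreal (Qf K p (\<lambda>j. ey j - ez j)) \<le> ?I"
    by (rule INF_greatest) (rule lower)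
  have "?I = ennreal (Qf K p (\<lambda>j. ey j - ez j))" using up lo by (rule antisym)
  moreover have "0 \<le> Qf K p (\<lambda>j. ey j - ez j)" using Qf_nonneg[OF incp] .
  ultimately show ?thesis unfolding W2_def by simp
qed

end

lemma Winv_val:
  fixes \<xi> d g :: "nat \<Rightarrow> real" and \<tau> :: real
  assumes incp: "inc K \<xi>" and K1: "1 \<le> K" and tau: "\<tau> \<noteq> 0"
    and d: "d 0 = 0" "d K = 0"
    and g: "\<And>i. i \<in> {1..K-1} \<Longrightarrow> g i = - (\<Sum>j=1..K-1. Wmat \<xi> i j * d j) / \<tau>"
  shows "Winv_quad \<xi> K g = Qf K \<xi> d / \<tau>\<^sup>2"
proof -
  define y0 where "y0 = (\<lambda>i. if i \<in> {1..K-1} then - d i / \<tau> else 0)"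
  let ?P = "\<lambda>y. (\<forall>i\<in>{1..K-1}. (\<Sum>j=1..K-1. Wmat \<xi> i j * y j) = g i) \<and> (\<forall>i. i \<notin> {1..K-1} \<longrightarrow> y i = 0)"
  have sumy0: "(\<Sum>j=1..K-1. Wmat \<xi> i j * y0 j) = - (\<Sum>j=1..K-1. Wmat \<xi> i j * d j) / \<tau>" for i
  proof -
    have "(\<Sum>j=1..K-1. Wmat \<xi> i j * y0 j) = (\<Sum>j=1..K-1. - (Wmat \<xi> i j * d j) / \<tau>)"
      by (rule sum.cong[OF refl]) (simp add: y0_def)
    also have "\<dots> = - (\<Sum>j=1..K-1. Wmat \<xi> i j * d j) / \<tau>"
      by (simp add: sum_negf sum_divide_distrib)
    finally show ?thesis .
  qed
  have Py0: "?P y0" using sumy0 g by (auto simp: y0_def)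
  have uniq: "y = y0" if Py: "?P y" for y
  proof -
    define w where "w = (\<lambda>i. y i - y0 i)"
    have w0: "w 0 = 0" "w K = 0" using Py unfolding w_def y0_def by auto
    have Ww: "(\<Sum>j=1..K-1. Wmat \<xi> i j * w j) = 0" if i: "i \<in> {1..K-1}" for i
    proof -
      have "(\<Sum>j=1..K-1. Wmat \<xi> i j * w j) = (\<Sum>j=1..K-1. Wmat \<xi> i j * y j) - (\<Sum>j=1..K-1. Wmat \<xi> i j * y0 j)"
        unfolding w_def by (simp add: sum_subtractf right_diff_distrib)
      also have "\<dots> = 0" using Py Py0 i by simp
      finally show ?thesis .
    qed
    have "Qf K \<xi> w = (\<Sum>i=1..K-1. w i * (\<Sum>j=1..K-1. Wmat \<xi> i j * w j))"
      using quad_id[OF K1 w0] by simp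
    also have "\<dots> = 0" using Ww by simp
    finally have Q0: "Qf K \<xi> w = 0" .
    show "y = y0"
    proof
      fix i
      show "y i = y0 i"
      proof (cases "i \<in> {1..K-1}")
        case True
        then have "w i = 0" using Qf_zero[OF incp Q0, of i] by auto
        then show ?thesis unfolding w_def by simp
      next
        case False
        then show ?thesis using Py unfolding y0_def by auto
      qed
    qed
  qed
  have "(THE y. ?P y) = y0" by (rule the_equality[of ?P, OF Py0 uniq])
  then have "Winv_quad \<xi> K g = (\<Sum>i=1..K-1. g i * y0 i)" unfolding Winv_quad_def by simp
  also have "\<dots> = (\<Sum>i=1..K-1. d i * (\<Sum>j=1..K-1. Wmat \<xi> i j * d j)) / \<tau>\<^sup>2"
    unfolding sum_divide_distrib
    by (rule sum.cong[OF refl]) (use g tau in \<open>auto simp: y0_def power2_eq_square\<close>)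
  also have "\<dots> = Qf K \<xi> d / \<tau>\<^sup>2" using quad_id[OF K1 d] by simp
  finally show ?thesis .
qed

lemma telesc:
  fixes A B :: "nat \<Rightarrow> real"
  assumes "\<And>n. 1 \<le> n \<Longrightarrow> A n \<le> B (n - 1) - B n"
  shows "(\<Sum>n=1..N. A n) \<le> B 0 - B N"
proof (induction N)
  case 0 then show ?case by simp
next
  case (Suc N)
  have "(\<Sum>n=1..Suc N. A n) = (\<Sum>n=1..N. A n) + A (Suc N)" by simp
  also have "\<dots> \<le> (B 0 - B N) + (B N - B (Suc N))" using Suc.IH assms[of "Suc N"] by simp
  finally show ?case by simp
qed




theorem lemma12:
  fixes a b M \<tau> :: real and K :: nat and \<xi> :: "nat \<Rightarrow> real"
    and P P1 P2 \<phi> V V1 V2 :: "real \<Rightarrow> real"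
    and u :: "nat \<Rightarrow> real \<Rightarrow> real" and x :: "nat \<Rightarrow> nat \<Rightarrow> real"
  assumes ab: "a < b" and M: "M > 0" and tau: "\<tau> > 0"
    and mesh: "is_mesh M K \<xi>"
    \<comment> \<open>pressure P\<close>
    and P_cont: "continuous_on {0..} P" and P0: "P 0 = 0"
    and P_d1: "\<And>r. r > 0 \<Longrightarrow> (P has_real_derivative P1 r) (at r)"
    and P_d2: "\<And>r. r > 0 \<Longrightarrow> (P1 has_real_derivative P2 r) (at r)"
    and P2_cont: "continuous_on {0<..} P2"
    and P1_pos: "\<And>r. r > 0 \<Longrightarrow> P1 r > 0"
    and P1_0: "\<exists>L. (P1 \<longlongrightarrow> L) (at_right 0)"
    and P1_inf: "filterlim P1 at_top at_top"
    and P_conc: "concave_on {0<..} (\<lambda>s. P (1 / s))"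
    \<comment> \<open>phi is a second antiderivative of P'(r)/r on (0,oo)\<close>
    and phi: "\<exists>\<phi>1. \<forall>r>0. (\<phi> has_real_derivative \<phi>1 r) (at r)
                      \<and> (\<phi>1 has_real_derivative P1 r / r) (at r)"
    \<comment> \<open>potential V in C^2(I) with Neumann condition\<close>
    and V_d1: "\<And>y. y \<in> {a..b} \<Longrightarrow> (V has_real_derivative V1 y) (at y within {a..b})"
    and V_d2: "\<And>y. y \<in> {a..b} \<Longrightarrow> (V1 has_real_derivative V2 y) (at y within {a..b})"
    and V2_cont: "continuous_on {a..b} V2"
    and V_bc: "V1 a = 0" "V1 b = 0"
    and tauLambda: "\<tau> * Sup ((\<lambda>y. - V2 y) ` {a..b}) < 1"
    \<comment> \<open>discrete solution\<close>
    and x_in: "\<And>n. x n \<in> xset a b K"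
    and u_def: "\<And>n. u n = u_xi a b K \<xi> (x n)"
    and u_min: "\<And>n v. n \<ge> 1 \<Longrightarrow> v \<in> Dset a b K \<xi> \<Longrightarrow>
        1 / (2 * \<tau>) * (W2 a b (u n) (u (n - 1)))\<^sup>2 + E_cont \<phi> V a b (u n)
          \<le> 1 / (2 * \<tau>) * (W2 a b v (u (n - 1)))\<^sup>2 + E_cont \<phi> V a b v"
  shows "1 / (2 * \<tau>) * (\<Sum>n=1..N. (W2 a b (u n) (u (n - 1)))\<^sup>2)
           \<le> E_cont \<phi> V a b (u 0) - E_cont \<phi> V a b (u N)
       \<and> \<tau> / 2 * (\<Sum>n=1..N. Winv_quad \<xi> K (grad_E_disc \<phi> V a b M K \<xi> (x n)))
           \<le> E_cont \<phi> V a b (u 0) - E_cont \<phi> V a b (u N)"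
proof -
  have m: "\<xi> 0 = 0" "\<xi> K = M" using mesh unfolding is_mesh_def by auto
  have K1: "1 \<le> K"
  proof (rule ccontr)
    assume "\<not> 1 \<le> K"
    then have "K = 0" by simp
    then show False using m M by simp
  qed
  have incp: "inc K \<xi>" using mesh_inc[OF mesh] .
  have Vc: "continuous_on {a..b} V" by (rule DERIV_continuous_on[OF V_d1])
  obtain \<phi>1 where \<phi>1: "\<forall>r>0. (\<phi> has_real_derivative \<phi>1 r) (at r) \<and> (\<phi>1 has_real_derivative P1 r / r) (at r)"
    using phi by blast
  have phid: "\<phi> differentiable (at r)" if "r > 0" for r
    using \<phi>1 that unfolding real_differentiable_def by blast
  have taun: "\<tau> \<noteq> 0" using tau by simp
  have xs: "x n \<in> xset a b K" for n using x_in .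
  have Eeq: "E_cont \<phi> V a b (u_xi a b K \<xi> y) = E_disc \<phi> V a b M K \<xi> y" if y: "y \<in> xset a b K" for y
  proof -
    interpret Eset K \<xi> "ext_vec a b K y" a b V
      using incp K1 ext_inc[OF y] Vc by unfold_locales auto
    show ?thesis unfolding u_xi_Ufun Econt_CF Edisc_CF[OF mesh K1 y Vc] ..
  qed
  have W2eq: "(W2 a b (u_xi a b K \<xi> y) (u_xi a b K \<xi> z))\<^sup>2 = Qf K \<xi> (\<lambda>j. ext_vec a b K y j - ext_vec a b K z j)"
    if y: "y \<in> xset a b K" and z: "z \<in> xset a b K" for y z
  proof -
    interpret twoX K \<xi> "ext_vec a b K y" "ext_vec a b K z" a b
      using incp K1 ext_inc[OF y] ext_inc[OF z] by unfold_locales auto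
    show ?thesis unfolding u_xi_Ufun using W2_sq .
  qed
  have inD: "u_xi a b K \<xi> y \<in> Dset a b K \<xi>" if "y \<in> xset a b K" for y
    unfolding Dset_def using that by blast
  have step1: "1 / (2 * \<tau>) * (W2 a b (u n) (u (n - 1)))\<^sup>2 \<le> E_cont \<phi> V a b (u (n - 1)) - E_cont \<phi> V a b (u n)"
    if n: "1 \<le> n" for n
  proof -
    have "1 / (2 * \<tau>) * (W2 a b (u n) (u (n - 1)))\<^sup>2 + E_cont \<phi> V a b (u n)
          \<le> 1 / (2 * \<tau>) * (W2 a b (u (n - 1)) (u (n - 1)))\<^sup>2 + E_cont \<phi> V a b (u (n - 1))"
      by (rule u_min[OF n]) (simp add: u_def inD xs)
    moreover have "(W2 a b (u (n - 1)) (u (n - 1)))\<^sup>2 = 0"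
      using W2eq[OF xs xs, of "n - 1" "n - 1"] unfolding u_def by (simp add: Qf_def)
    ultimately show ?thesis by simp
  qed
  have step2: "\<tau> / 2 * Winv_quad \<xi> K (grad_E_disc \<phi> V a b M K \<xi> (x n)) = 1 / (2 * \<tau>) * (W2 a b (u n) (u (n - 1)))\<^sup>2"
    if n: "1 \<le> n" for n
  proof -
    let ?xn = "x n" and ?xp = "x (n - 1)"
    let ?en = "ext_vec a b K ?xn" and ?ep = "ext_vec a b K ?xp"
    define d where "d = (\<lambda>j. ?en j - ?ep j)"
    have W2n: "(W2 a b (u n) (u (n - 1)))\<^sup>2 = Qf K \<xi> d"
      unfolding d_def u_def using W2eq[OF xs xs] .
    have gk: "grad_E_disc \<phi> V a b M K \<xi> ?xn k = - (\<Sum>j=1..K-1. Wmat \<xi> k j * d j) / \<tau>"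
      if kk: "k \<in> {1..K-1}" for k
    proof -
      have k: "1 \<le> k" "k < K" using kk K1 by auto
      let ?Ed = "\<lambda>t. E_disc \<phi> V a b M K \<xi> (?xn(k:=t))"
      let ?Cf = "\<lambda>t. CF \<phi> V a K \<xi> (ext_vec a b K (?xn(k:=t)))"
      have "?Cf differentiable (at (?xn k))" using CF_diff[OF xs k incp Vc phid] .
      then obtain D where dC: "(?Cf has_real_derivative D) (at (?xn k))"
        unfolding real_differentiable_def by blast
      have incn: "inc K ?en" using ext_inc[OF xs] .
      have enk: "?en k = ?xn k" using k unfolding ext_vec_def by simp
      have lo: "?en (k - 1) < ?xn k" using inc_step[OF incn, of k] k enk by simp
      have hi: "?xn k < ?en (k + 1)" using inc_step[OF incn, of "k + 1"] k enk by simp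
      define S where "S = {?en (k - 1)<..<?en (k + 1)}"
      have inS: "?xn(k:=t) \<in> xset a b K" if "t \<in> S" for t
        using xset_upd[OF xs k] that unfolding S_def by auto
      have dE: "(?Ed has_real_derivative D) (at (?xn k))"
      proof (rule has_field_derivative_transform_within_open[OF dC, of S])
        fix t assume "t \<in> S"
        then show "?Cf t = ?Ed t" using Edisc_CF[OF mesh K1 inS Vc] by simp
      qed (use lo hi in \<open>auto simp: S_def\<close>)
      have gD: "grad_E_disc \<phi> V a b M K \<xi> ?xn k = D"
        unfolding grad_E_disc_def using DERIV_imp_deriv[OF dE] .
      have dQ: "((\<lambda>t. Qf K \<xi> (\<lambda>i. ext_vec a b K (?xn(k:=t)) i - ?ep i)) has_real_derivative
          2 * (\<Sum>j=1..K-1. Wmat \<xi> k j * d j)) (at (?xn k))"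
        using Q_deriv[OF k, where a=a and b=b and x="x n" and x'="x (n - 1)" and \<xi>=\<xi>] unfolding d_def .
      let ?Fk = "\<lambda>t. 1 / (2 * \<tau>) * Qf K \<xi> (\<lambda>i. ext_vec a b K (?xn(k:=t)) i - ?ep i) + ?Ed t"
      have dF: "(?Fk has_real_derivative 1 / (2 * \<tau>) * (2 * (\<Sum>j=1..K-1. Wmat \<xi> k j * d j)) + D) (at (?xn k))"
        by (rule DERIV_add[OF DERIV_cmult[OF dQ] dE])
      define \<delta>0 where "\<delta>0 = min (?xn k - ?en (k - 1)) (?en (k + 1) - ?xn k)"
      have d0pos: "0 < \<delta>0" unfolding \<delta>0_def using lo hi by simp
      have locmin: "\<forall>t. \<bar>?xn k - t\<bar> < \<delta>0 \<longrightarrow> ?Fk (?xn k) \<le> ?Fk t"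
      proof (intro allI impI)
        fix t assume t: "\<bar>?xn k - t\<bar> < \<delta>0"
        then have tS: "t \<in> S" unfolding S_def \<delta>0_def by auto
        let ?y = "?xn(k:=t)"
        have y: "?y \<in> xset a b K" using inS[OF tS] .
        have um: "1 / (2 * \<tau>) * (W2 a b (u n) (u (n - 1)))\<^sup>2 + E_cont \<phi> V a b (u n)
          \<le> 1 / (2 * \<tau>) * (W2 a b (u_xi a b K \<xi> ?y) (u (n - 1)))\<^sup>2 + E_cont \<phi> V a b (u_xi a b K \<xi> ?y)"
          by (rule u_min[OF n inD[OF y]])
        have e1: "(W2 a b (u_xi a b K \<xi> ?y) (u (n - 1)))\<^sup>2 = Qf K \<xi> (\<lambda>i. ext_vec a b K ?y i - ?ep i)"
          unfolding u_def[of "n - 1"] using W2eq[OF y xs] .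
        have e2: "E_cont \<phi> V a b (u_xi a b K \<xi> ?y) = ?Ed t" using Eeq[OF y] .
        have e3: "E_cont \<phi> V a b (u n) = ?Ed (?xn k)" unfolding u_def using Eeq[OF xs] by simp
        have e4: "Qf K \<xi> (\<lambda>i. ext_vec a b K (?xn(k:=?xn k)) i - ?ep i) = Qf K \<xi> d"
          unfolding d_def by simp
        show "?Fk (?xn k) \<le> ?Fk t" using um unfolding W2n e1 e2 e3 e4 .
      qed
      have "1 / (2 * \<tau>) * (2 * (\<Sum>j=1..K-1. Wmat \<xi> k j * d j)) + D = 0"
        by (rule DERIV_local_min[OF dF d0pos locmin])
      then have "D = - (\<Sum>j=1..K-1. Wmat \<xi> k j * d j) / \<tau>" using taun by (simp add: field_simps)
      then show ?thesis using gD by simp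
    qed
    have dz: "d 0 = 0" "d K = 0" unfolding d_def using K1 by (auto simp: ext_vec_def)
    have "Winv_quad \<xi> K (grad_E_disc \<phi> V a b M K \<xi> ?xn) = Qf K \<xi> d / \<tau>\<^sup>2"
      by (rule Winv_val[OF incp K1 taun dz gk])
    then show ?thesis unfolding W2n using taun by (simp add: power2_eq_square field_simps)
  qed
  have A1: "(\<Sum>n=1..N. 1 / (2 * \<tau>) * (W2 a b (u n) (u (n - 1)))\<^sup>2) \<le> E_cont \<phi> V a b (u 0) - E_cont \<phi> V a b (u N)"
    by (rule telesc[of _ "\<lambda>n. E_cont \<phi> V a b (u n)"]) (use step1 in auto)
  have A2: "(\<Sum>n=1..N. \<tau> / 2 * Winv_quad \<xi> K (grad_E_disc \<phi> V a b M K \<xi> (x n))) \<le> E_cont \<phi> V a b (u 0) - E_cont \<phi> V a b (u N)"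
  proof (rule telesc[of _ "\<lambda>n. E_cont \<phi> V a b (u n)"])
    fix n :: nat assume n: "1 \<le> n"
    show "\<tau> / 2 * Winv_quad \<xi> K (grad_E_disc \<phi> V a b M K \<xi> (x n)) \<le> E_cont \<phi> V a b (u (n - 1)) - E_cont \<phi> V a b (u n)"
      unfolding step2[OF n] using step1[OF n] .
  qed
  show ?thesis using A1 A2 by (simp add: sum_distrib_left)
qed



end
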